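(* Consider the deterministic discrete-time LTI system $$\bar x_{k+1}=\mathcal{A}_\mathrm{L}\bar x_k+\mathcal{B}_\mathrm{L}u_k,\qquad y_k=\begin{bmatrix}\mathcal{C}&\mathcal{C}_\mathrm{d}\end{bmatrix}\bar x_k+\mathcal{D}u_k,$$ with $\bar x_k=[x_k^\top\ d_k^\top]^\top\in\mathbb{R}^{\bar n}$, $x_k\in\mathbb{R}^{n_\mathrm{x}}$, $d_k\in\mathbb{R}^{n_\mathrm{d}}$, $\bar n=n_\mathrm{x}+n_\mathrm{d}$, $u_k\in\mathbb{R}^{n_\mathrm{u}}$, $y_k\in\mathbb{R}^{n_\mathrm{y}}$, $\mathcal{A}_\mathrm{L}=\begin{bmatrix}\mathcal{A}&\mathcal{B}_\mathrm{d}\\0&\mathcal{A}_\mathrm{d}\end{bmatrix}$, $\mathcal{B}_\mathrm{L}=\begin{bmatrix}\mathcal{B}\\0\end{bmatrix}$. Let $\{u^\mathrm{m}_k\}_{k=0}^{N+L+\bar n-2}$ be a measured input sequence with resulting state trajectory $\bar x^\mathrm{m}_k=[(x^\mathrm{m}_k)^\top\ (d^\mathrm{m}_k)^\top]^\top$ and output trajectory $y^\mathrm{m}_k$. Assume that $(\mathcal{A},\mathcal{B})$ is controllable, that the controllability matrix $\mathcal{K}_\mathrm{d}:=\begin{bmatrix}d^\mathrm{m}_0&\mathcal{A}_\mathrm{d}d^\mathrm{m}_0&\cdots&\mathcal{A}_\mathrm{d}^{n_\mathrm{d}-1}d^\mathrm{m}_0\end{bmatrix}$ has rank $\nu$ with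 $1\le\nu<n_\mathrm{d}$, and that $\{u^\mathrm{m}_k\}$ is persistently exciting of order $L+\bar n$. Then: (i) $\operatorname{rank}\begin{bmatrix}\mathcal{H}_{0,1,N+\bar n}(\bar x^\mathrm{m})\\ \mathcal{H}_{0,L,N+\bar n}(u^\mathrm{m})\end{bmatrix}=Ln_\mathrm{u}+n_\mathrm{x}+\nu$; (ii) for every $x_0\in\mathbb{R}^{n_\mathrm{x}}$, every $d_0$ in the column space of $\mathcal{K}_\mathrm{d}$, and every $u_{[0,L-1]}\in\mathbb{R}^{Ln_\mathrm{u}}$, with $\bar x_0=[x_0^\top\ d_0^\top]^\top$, there exists $g\in\mathbb{R}^{N+\bar n}$ such that $$\begin{bmatrix}\mathcal{H}_{0,1,N+\bar n}(\bar x^\mathrm{m})\\ \mathcal{H}_{0,L,N+\bar n}(u^\mathrm{m})\end{bmatrix}g=\begin{bmatrix}\bar x_0\\ u_{[0,L-1]}\end{bmatrix};$$ (iii) for every $L$-long input-output trajectory $(u_{[0,L-1]},y_{[0,L-1]})$ of the system whose initial state $\bar x_0=[x_0^\top\ d_0^\top]^\top$ has $d_0$ in the column space of $\mathcal{K}_\mathrm{d}$, there exists $g\in\mathbb{R}^{N+\bar n}$ such that $$\begin{bmatrix}\mathcal{H}_{0,L,N+\bar n}(u^\mathrm{m})\\ \mathcal{H}_{0,L,N+\bar n}(y^\mathrm{m})\end{bmatrix}g=\begin{bmatrix}u_{[0,L-1]}\\ y_{[0,L-1]}\end{bmatrix}.$$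
   Context: For a sequence $\{w_k\}$ and integers $i$, $s\ge1$, $N\ge1$, the block-Hankel matrix $\mathcal{H}_{i,s,N}(w)$ is the matrix with $s$ block rows and $N$ columns whose $(a,b)$ block entry is $w_{i+a+b-2}$ (first row $[w_i\ \cdots\ w_{i+N-1}]$, last row $[w_{i+s-1}\ \cdots\ w_{i+N+s-2}]$). A sequence $\{w_k\}_{k=i}^{i+N+s-2}$ is persistently exciting of order $s$ if $\mathcal{H}_{i,s,N}(w)$ has full row rank. The stacked vector $u_{[k_1,k_2]}:=[u_{k_1}^\top\ u_{k_1+1}^\top\ \cdots\ u_{k_2}^\top]^\top$, and similarly for $y$. A pair $(A,B)$ with $A\in\mathbb{R}^{q\times q}$ is controllable if $[B\ AB\ \cdots\ A^{q-1}B]$ has rank $q$. *)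

theory Defs
  imports "Jordan_Normal_Form.DL_Rank"
begin

definition mrank :: "real mat \<Rightarrow> nat" where
  "mrank M = vec_space.rank (dim_row M) M"

definition colspace :: "real mat \<Rightarrow> real vec set" where
  "colspace M = {M *\<^sub>v g | g. g \<in> carrier_vec (dim_col M)}"

definition hcat :: "real mat \<Rightarrow> real mat \<Rightarrow> real mat" where
  "hcat A B = four_block_mat A B (0\<^sub>m 0 (dim_col A)) (0\<^sub>m 0 (dim_col B))"

text \<open>Block-Hankel matrix H_{i,s,N}(w) for a sequence w of vectors of dimension p:
  s block rows (each of p scalar rows) and N columns; block (a,b) (0-based) is w (i+a+b).\<close>
definition block_hankel :: "nat \<Rightarrow> nat \<Rightarrow> nat \<Rightarrow> nat \<Rightarrow> (nat \<Rightarrow> real vec) \<Rightarrow> real mat" where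
  "block_hankel p i s N w = mat (s * p) N (\<lambda>(r, c). w (i + r div p + c) $ (r mod p))"

definition pers_exc :: "nat \<Rightarrow> nat \<Rightarrow> nat \<Rightarrow> nat \<Rightarrow> (nat \<Rightarrow> real vec) \<Rightarrow> bool" where
  "pers_exc p i s N w \<longleftrightarrow> mrank (block_hankel p i s N w) = s * p"

definition stack :: "nat \<Rightarrow> nat \<Rightarrow> nat \<Rightarrow> (nat \<Rightarrow> real vec) \<Rightarrow> real vec" where
  "stack p k1 len w = vec (len * p) (\<lambda>r. w (k1 + r div p) $ (r mod p))"

text \<open>Controllability matrix [B AB ... A^(q-1) B] for A q x q and B with m columns.\<close>
definition ctrb_mat :: "real mat \<Rightarrow> real mat \<Rightarrow> real mat" where
  "ctrb_mat A B = mat (dim_row A) (dim_row A * dim_col B)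
     (\<lambda>(r, c). (A ^\<^sub>m (c div dim_col B) * B) $$ (r, c mod dim_col B))"

definition controllable :: "real mat \<Rightarrow> real mat \<Rightarrow> bool" where
  "controllable A B \<longleftrightarrow> mrank (ctrb_mat A B) = dim_row A"

end

theory Submission
  imports Defs "Jordan_Normal_Form.Gram_Schmidt"
begin

lemma rank_le_rows:
  fixes A :: "real mat"
  assumes A: "A \<in> carrier_mat n k"
  shows "vec_space.rank n A \<le> n"
proof -
  interpret vec_space "TYPE(real)" n .
  have c: "set (cols A) \<subseteq> carrier_vec n" using cols_dim[of A] A by auto
  have "subspace class_ring (span (set (cols A))) V" using span_is_subspace[OF c] .
  from subspace_dim[OF this fin_dim fin_dim_span_cols[OF A]]
  show ?thesis unfolding rank_def dim_is_n .
qed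

lemma mult_unit_col:
  fixes A :: "real mat"
  assumes A: "A \<in> carrier_mat n k" and i: "i < k"
  shows "A *\<^sub>v unit_vec k i = col A i"
  using A i by (intro eq_vecI) auto

lemma rank_trivial_kernel:
  fixes A :: "real mat"
  assumes A: "A \<in> carrier_mat n k"
    and ker: "\<And>v. v \<in> carrier_vec k \<Longrightarrow> A *\<^sub>v v = 0\<^sub>v n \<Longrightarrow> v = 0\<^sub>v k"
  shows "vec_space.rank n A = k"
proof -
  interpret vec_space "TYPE(real)" n .
  have dist: "distinct (cols A)"
  proof (rule ccontr)
    assume "\<not> distinct (cols A)"
    then obtain i j where ij: "i < k" "j < k" "i \<noteq> j" "cols A ! i = cols A ! j"
      using A by (auto simp: distinct_conv_nth)
    let ?v = "unit_vec k i - unit_vec k j :: real vec"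
    have v: "?v \<in> carrier_vec k" by auto
    have "A *\<^sub>v ?v = A *\<^sub>v unit_vec k i - A *\<^sub>v unit_vec k j"
      using A by (auto simp: mult_minus_distrib_mat_vec)
    also have "\<dots> = 0\<^sub>v n" using ij A by (simp add: mult_unit_col)
    finally have "?v = 0\<^sub>v k" by (rule ker[OF v])
    hence "?v $ i = 0" using ij by simp
    thus False using ij by simp
  qed
  have li: "\<not> lin_dep (set (cols A))"
  proof
    assume "lin_dep (set (cols A))"
    from lin_depE[OF A this dist] obtain v where "v \<in> carrier_vec k" "v \<noteq> 0\<^sub>v k" "A *\<^sub>v v = 0\<^sub>v n" .
    thus False using ker by auto
  qed
  show ?thesis using lin_indpt_full_rank[OF A dist li] .
qed

lemma nontrivial_kernel:
  fixes A :: "real mat"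
  assumes A: "A \<in> carrier_mat n k" and nk: "n < k"
  shows "\<exists>v \<in> carrier_vec k. v \<noteq> 0\<^sub>v k \<and> A *\<^sub>v v = 0\<^sub>v n"
  using rank_trivial_kernel[OF A] rank_le_rows[OF A] nk by fastforce

lemma full_rank_surj:
  fixes A :: "real mat"
  assumes A: "A \<in> carrier_mat n k" and r: "vec_space.rank n A = n" and b: "b \<in> carrier_vec n"
  shows "\<exists>g \<in> carrier_vec k. A *\<^sub>v g = b"
proof -
  interpret vec_space "TYPE(real)" n .
  let ?S = "span (set (cols A))"
  have c: "set (cols A) \<subseteq> carrier_vec n" using cols_dim[of A] A by auto
  have sub: "subspace class_ring ?S V" using span_is_subspace[OF c] .
  have sm: "submodule class_ring ?S V" using span_is_submodule[OF c] .
  have vsS: "vectorspace class_ring (vs ?S)" using subspace_is_vs[OF sub] .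
  have fd: "vectorspace.fin_dim class_ring (vs ?S)" using fin_dim_span_cols[OF A] .
  obtain bs where bs: "finite bs" "vectorspace.basis class_ring (vs ?S) bs"
    using vectorspace.finite_basis_exists[OF vsS fd] by blast
  have cb: "card bs = n" using vectorspace.dim_basis[OF vsS bs] r unfolding rank_def by simp
  have bsS: "bs \<subseteq> ?S" using bs(2) unfolding vectorspace.basis_def[OF vsS] by auto
  have bsC: "bs \<subseteq> carrier_vec n" using bsS span_closed[OF c] by auto
  have "LinearCombinations.module.lin_indpt class_ring (vs ?S) bs"
    using bs(2) unfolding vectorspace.basis_def[OF vsS] by auto
  hence li: "lin_indpt bs" using span_li_not_depend(2)[OF bsS sm] by auto
  have "basis bs" by (rule dim_li_is_basis[OF fin_dim bs(1) bsC li]) (simp add: cb dim_is_n)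
  hence "span bs = carrier V" unfolding basis_def by auto
  moreover have "span bs \<subseteq> ?S" using span_is_subset[OF bsS sm] .
  ultimately have "b \<in> ?S" using b by auto
  hence "b \<in> col_space A" unfolding col_space_def .
  thus ?thesis unfolding col_space_eq[OF A] using A by auto
qed

lemma fredholm:
  fixes A :: "real mat"
  assumes A: "A \<in> carrier_mat n k" and b: "b \<in> carrier_vec n"
    and orth: "\<And>w. w \<in> carrier_vec n \<Longrightarrow> (\<forall>c < k. w \<bullet> col A c = 0) \<Longrightarrow> w \<bullet> b = 0"
  shows "\<exists>g \<in> carrier_vec k. A *\<^sub>v g = b"
proof -
  interpret cof_vec_space n "TYPE(real)" .
  have c: "set (cols A) \<subseteq> carrier_vec n" using cols_dim[of A] A by auto
  let ?P = "\<lambda>T. T \<subseteq> set (cols A) \<and> lin_indpt T"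
  have e: "\<not> lin_dep {}" by (simp add: lin_dep_def)
  have "\<exists>S. finite S \<and> maximal S ?P"
    by (rule maximal_exists[of ?P "card (set (cols A))" "{}"]) (auto intro: card_mono rev_finite_subset simp: e)
  then obtain S where S: "finite S" "maximal S ?P" by blast
  have SP: "S \<subseteq> set (cols A)" "lin_indpt S" using S(2) unfolding maximal_def by auto
  have SC: "S \<subseteq> carrier_vec n" using SP c by auto
  have spanS: "span S = span (set (cols A))"
  proof
    show "span S \<subseteq> span (set (cols A))" using span_is_monotone[OF SP(1)] .
    have "set (cols A) \<subseteq> span S"
    proof
      fix x assume x: "x \<in> set (cols A)"
      show "x \<in> span S"
      proof (cases "x \<in> S")
        case True thus ?thesis using in_own_span[OF SC] by auto
      next
        case False
        show ?thesis
        proof (rule ccontr)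
          assume "x \<notin> span S"
          moreover have xC: "x \<in> carrier_vec n" using x c by auto
          ultimately have "lin_indpt (S \<union> {x})" using lin_dep_iff_in_span[OF SC SP(2) _ False] by simp
          hence "S \<union> {x} = S" using S(2) x SP(1) unfolding maximal_def by blast
          thus False using False by auto
        qed
      qed
    qed
    thus "span (set (cols A)) \<subseteq> span S" using span_is_subset[OF _ span_is_submodule[OF SC]] by auto
  qed
  obtain ws where ws: "set ws = S" "distinct ws" using finite_distinct_list[OF S(1)] by blast
  define us where "us = gram_schmidt n ws"
  have wsC: "set ws \<subseteq> carrier_vec n" using ws SC by auto
  note gs = gram_schmidt_result[OF wsC ws(2) _ us_def]
  have li: "\<not> lin_dep (set ws)" using ws SP by auto
  have us: "span (set ws) = span (set us)" "corthogonal us" "set us \<subseteq> carrier_vec n" "distinct us"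
    using gs[OF li] by auto
  have bspan: "b \<in> span (set us)"
  proof (rule ccontr)
    assume nb: "b \<notin> span (set us)"
    define v where "v = adjuster n b us + b"
    have adjC: "adjuster n b us \<in> carrier_vec n" using us b by auto
    have vC: "v \<in> carrier_vec n" unfolding v_def using adjC b by auto
    have v0: "v \<noteq> 0\<^sub>v n" unfolding v_def using adjust_nonzero[OF us(3) us(4) b nb] .
    have "v \<in> orthogonal_complement (set us)"
      unfolding orthogonal_complement_def
    proof (intro CollectI conjI ballI)
      show "v \<in> carrier_vec n" by fact
      fix y assume "y \<in> set us"
      then obtain i where i: "i < length us" "y = us ! i" by (auto simp: in_set_conv_nth)
      have "v \<bullet>c us ! i = 0" unfolding v_def using adjust_zero[OF us(3) us(2) b i(1)] .
      thus "v \<bullet> y = 0" using i by (simp add: scalar_prod_def)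
    qed
    hence vo: "v \<in> orthogonal_complement (span (set us))" using us(3) by simp
    have "\<forall>cc < k. v \<bullet> col A cc = 0"
    proof (intro allI impI)
      fix cc assume cc: "cc < k"
      have "col A cc \<in> set (cols A)" using cc A by (auto simp: cols_def)
      hence "col A cc \<in> span (set us)" using in_own_span[OF c] spanS ws(1) us(1) by auto
      thus "v \<bullet> col A cc = 0" using vo unfolding orthogonal_complement_def by auto
    qed
    hence vb: "v \<bullet> b = 0" using orth[OF vC] by auto
    have "adjuster n b us \<in> span (set us)" using adjuster_in_span[OF b us(3) us(4)] .
    hence va: "v \<bullet> adjuster n b us = 0" using vo unfolding orthogonal_complement_def by auto
    have "v \<bullet> v = v \<bullet> adjuster n b us + v \<bullet> b"
      unfolding v_def[of] using scalar_prod_add_distrib[OF vC adjC b] v_def by simp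
    hence "v \<bullet> v = 0" using va vb by simp
    hence "(\<Sum>i\<in>{0..<n}. v $ i * v $ i) = 0" using vC by (simp add: scalar_prod_def)
    hence "\<forall>i\<in>{0..<n}. v $ i * v $ i = 0" by (subst sum_nonneg_eq_0_iff[symmetric]) auto
    hence "v = 0\<^sub>v n" using vC by (intro eq_vecI) auto
    thus False using v0 by simp
  qed
  hence "b \<in> col_space A" unfolding col_space_def using spanS ws(1) us(1) by simp
  thus ?thesis unfolding col_space_eq[OF A] using A by auto
qed

lemma pow_Suc_left:
  fixes F :: "'a::semiring_1 mat"
  assumes F: "F \<in> carrier_mat m m"
  shows "F ^\<^sub>m Suc k = F * F ^\<^sub>m k"
proof (induction k)
  case 0 thus ?case using F by simp
next
  case (Suc k)
  have "F ^\<^sub>m Suc (Suc k) = F ^\<^sub>m Suc k * F" by simp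
  also have "\<dots> = (F * F ^\<^sub>m k) * F" using Suc by simp
  also have "\<dots> = F * (F ^\<^sub>m k * F)" using F by (simp add: assoc_mult_mat[of _ m m _ m _ m])
  finally show ?case by simp
qed

lemma pow_Suc_mult_vec:
  fixes F :: "real mat"
  assumes F: "F \<in> carrier_mat m m" and v: "v \<in> carrier_vec m"
  shows "F ^\<^sub>m Suc k *\<^sub>v v = F *\<^sub>v (F ^\<^sub>m k *\<^sub>v v)"
proof -
  have "F ^\<^sub>m Suc k *\<^sub>v v = (F * F ^\<^sub>m k) *\<^sub>v v" by (simp only: pow_Suc_left[OF F])
  also have "\<dots> = F *\<^sub>v (F ^\<^sub>m k *\<^sub>v v)" using F v by (intro assoc_mult_mat_vec) auto
  finally show ?thesis .
qed

definition kry :: "real mat \<Rightarrow> real vec \<Rightarrow> nat \<Rightarrow> (nat \<Rightarrow> real) \<Rightarrow> real vec" where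
  "kry F v r a = vec (dim_vec v) (\<lambda>i. \<Sum>j<r. a j * (F ^\<^sub>m j *\<^sub>v v) $ i)"

lemma kry_carrier[simp]: "v \<in> carrier_vec m \<Longrightarrow> kry F v r a \<in> carrier_vec m"
  unfolding kry_def by auto

lemma F_kry:
  fixes F :: "real mat"
  assumes F: "F \<in> carrier_mat m m" and v: "v \<in> carrier_vec m"
  shows "F *\<^sub>v kry F v r a = vec m (\<lambda>i. \<Sum>j<r. a j * (F ^\<^sub>m Suc j *\<^sub>v v) $ i)"
proof (rule eq_vecI)
  fix i assume "i < dim_vec (vec m (\<lambda>i. \<Sum>j<r. a j * (F ^\<^sub>m Suc j *\<^sub>v v) $ i))"
  hence i: "i < m" by simp
  have "(F *\<^sub>v kry F v r a) $ i = (\<Sum>l<m. F $$ (i,l) * (\<Sum>j<r. a j * (F ^\<^sub>m j *\<^sub>v v) $ l))"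
    using F v i by (simp add: kry_def scalar_prod_def row_def lessThan_atLeast0)
  also have "\<dots> = (\<Sum>j<r. a j * (\<Sum>l<m. F $$ (i,l) * (F ^\<^sub>m j *\<^sub>v v) $ l))"
    by (simp add: sum_distrib_left sum_distrib_right sum.swap[of _ "{..<m}"] mult_ac)
  also have "\<dots> = (\<Sum>j<r. a j * (F ^\<^sub>m Suc j *\<^sub>v v) $ i)"
  proof (rule sum.cong[OF refl])
    fix j
    have "(F ^\<^sub>m Suc j *\<^sub>v v) $ i = (F *\<^sub>v (F ^\<^sub>m j *\<^sub>v v)) $ i" using pow_Suc_mult_vec[OF F v] by simp
    also have "\<dots> = (\<Sum>l<m. F $$ (i,l) * (F ^\<^sub>m j *\<^sub>v v) $ l)"
      using F v i by (simp add: scalar_prod_def row_def lessThan_atLeast0)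
    finally show "a j * (\<Sum>l<m. F $$ (i,l) * (F ^\<^sub>m j *\<^sub>v v) $ l) = a j * (F ^\<^sub>m Suc j *\<^sub>v v) $ i" by simp
  qed
  finally show "(F *\<^sub>v kry F v r a) $ i = vec m (\<lambda>i. \<Sum>j<r. a j * (F ^\<^sub>m Suc j *\<^sub>v v) $ i) $ i"
    using i by simp
qed (use F in simp)

lemma krylov_dep:
  fixes F :: "real mat"
  assumes F: "F \<in> carrier_mat m m" and v: "v \<in> carrier_vec m"
  shows "\<exists>r \<le> m. \<exists>\<beta>. F ^\<^sub>m r *\<^sub>v v = kry F v r \<beta>"
proof -
  define K where "K = mat m (Suc m) (\<lambda>(i,j). (F ^\<^sub>m j *\<^sub>v v) $ i)"
  have K: "K \<in> carrier_mat m (Suc m)" unfolding K_def by simp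
  obtain w where w: "w \<in> carrier_vec (Suc m)" "w \<noteq> 0\<^sub>v (Suc m)" "K *\<^sub>v w = 0\<^sub>v m"
    using nontrivial_kernel[OF K] by auto
  define J where "J = {j. j < Suc m \<and> w $ j \<noteq> 0}"
  have "J \<noteq> {}"
  proof
    assume "J = {}"
    hence "w = 0\<^sub>v (Suc m)" using w(1) unfolding J_def by (intro eq_vecI) auto
    thus False using w(2) by simp
  qed
  moreover have fJ: "finite J" unfolding J_def by simp
  ultimately have rJ: "Max J \<in> J" by simp
  define r where "r = Max J"
  have r: "r \<le> m" "w $ r \<noteq> 0" using rJ unfolding r_def J_def by auto
  have big: "w $ j = 0" if "r < j" "j < Suc m" for j
  proof (rule ccontr)
    assume "w $ j \<noteq> 0"
    hence "j \<in> J" using that unfolding J_def by auto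
    hence "j \<le> r" unfolding r_def using fJ by simp
    thus False using that by simp
  qed
  define \<beta> where "\<beta> = (\<lambda>j. - w $ j / w $ r)"
  have "F ^\<^sub>m r *\<^sub>v v = kry F v r \<beta>"
  proof (rule eq_vecI)
    fix i assume "i < dim_vec (kry F v r \<beta>)"
    hence i: "i < m" using v by (simp add: kry_def)
    have "0 = (K *\<^sub>v w) $ i" using w(3) i by simp
    also have "\<dots> = (\<Sum>j<Suc m. (F ^\<^sub>m j *\<^sub>v v) $ i * w $ j)"
      using i w(1) by (simp add: K_def scalar_prod_def row_def lessThan_atLeast0)
    also have "\<dots> = (\<Sum>j<Suc r. (F ^\<^sub>m j *\<^sub>v v) $ i * w $ j)"
      by (rule sum.mono_neutral_right) (use r big in auto)
    also have "\<dots> = (\<Sum>j<r. (F ^\<^sub>m j *\<^sub>v v) $ i * w $ j) + (F ^\<^sub>m r *\<^sub>v v) $ i * w $ r"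
      by simp
    finally have eq: "(F ^\<^sub>m r *\<^sub>v v) $ i * w $ r = - (\<Sum>j<r. (F ^\<^sub>m j *\<^sub>v v) $ i * w $ j)" by linarith
    have "(F ^\<^sub>m r *\<^sub>v v) $ i = - (\<Sum>j<r. (F ^\<^sub>m j *\<^sub>v v) $ i * w $ j) / w $ r"
      using eq r(2) by (simp add: field_simps)
    also have "\<dots> = (\<Sum>j<r. \<beta> j * (F ^\<^sub>m j *\<^sub>v v) $ i)"
      unfolding \<beta>_def by (simp add: sum_divide_distrib sum_negf[symmetric] mult_ac)
    finally show "(F ^\<^sub>m r *\<^sub>v v) $ i = kry F v r \<beta> $ i" using i v by (simp add: kry_def)
  qed (use F v in \<open>simp add: kry_def\<close>)
  thus ?thesis using r by blast
qed

lemma krylov_all: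
  fixes F :: "real mat"
  assumes F: "F \<in> carrier_mat m m" and v: "v \<in> carrier_vec m"
    and dep: "F ^\<^sub>m r *\<^sub>v v = kry F v r \<beta>"
  shows "\<exists>a. F ^\<^sub>m c *\<^sub>v v = kry F v r a"
proof (induction c)
  case 0
  show ?case
  proof (cases r)
    case 0 thus ?thesis using dep by auto
  next
    case (Suc r')
    have "F ^\<^sub>m 0 *\<^sub>v v = kry F v r (\<lambda>j. if j = 0 then 1 else 0)"
      using v F Suc by (intro eq_vecI) (auto simp del: sum.lessThan_Suc simp add: kry_def sum.lessThan_Suc_shift)
    thus ?thesis by blast
  qed
next
  case (Suc c)
  then obtain a where a: "F ^\<^sub>m c *\<^sub>v v = kry F v r a" by blast
  have "F ^\<^sub>m Suc c *\<^sub>v v = F *\<^sub>v kry F v r a" using a pow_Suc_mult_vec[OF F v] by simp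
  also have "\<dots> = vec m (\<lambda>i. \<Sum>j<r. a j * (F ^\<^sub>m Suc j *\<^sub>v v) $ i)" using F_kry[OF F v] .
  finally have eq: "F ^\<^sub>m Suc c *\<^sub>v v = vec m (\<lambda>i. \<Sum>j<r. a j * (F ^\<^sub>m Suc j *\<^sub>v v) $ i)" .
  show ?case
  proof (cases r)
    case 0
    thus ?thesis using eq v by (intro exI[of _ a]) (auto simp: kry_def)
  next
    case (Suc r')
    define a' where "a' = (\<lambda>j. (if j = 0 then 0 else a (j - 1)) + a r' * \<beta> j)"
    have "F ^\<^sub>m Suc c *\<^sub>v v = kry F v r a'"
    proof (rule eq_vecI)
      fix i assume "i < dim_vec (kry F v r a')"
      hence i: "i < m" using v by (simp add: kry_def)
      have "(\<Sum>j<r. a j * (F ^\<^sub>m Suc j *\<^sub>v v) $ i)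
          = (\<Sum>j<r'. a j * (F ^\<^sub>m Suc j *\<^sub>v v) $ i) + a r' * (F ^\<^sub>m r *\<^sub>v v) $ i"
        using Suc by simp
      also have "(F ^\<^sub>m r *\<^sub>v v) $ i = (\<Sum>j<r. \<beta> j * (F ^\<^sub>m j *\<^sub>v v) $ i)"
        using dep i v by (simp add: kry_def)
      also have "(\<Sum>j<r'. a j * (F ^\<^sub>m Suc j *\<^sub>v v) $ i)
          = (\<Sum>j<r. (if j = 0 then 0 else a (j - 1)) * (F ^\<^sub>m j *\<^sub>v v) $ i)"
        unfolding Suc by (subst sum.lessThan_Suc_shift) simp
      finally have e1: "(\<Sum>j<r. a j * (F ^\<^sub>m Suc j *\<^sub>v v) $ i) =
          (\<Sum>j<r. (if j = 0 then 0 else a (j - 1)) * (F ^\<^sub>m j *\<^sub>v v) $ i) + a r' * (\<Sum>j<r. \<beta> j * (F ^\<^sub>m j *\<^sub>v v) $ i)" .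
      have e2: "(\<Sum>j<r. a' j * (F ^\<^sub>m j *\<^sub>v v) $ i) =
          (\<Sum>j<r. (if j = 0 then 0 else a (j - 1)) * (F ^\<^sub>m j *\<^sub>v v) $ i) + (\<Sum>j<r. a r' * (\<beta> j * (F ^\<^sub>m j *\<^sub>v v) $ i))"
        unfolding a'_def by (simp only: distrib_right sum.distrib mult.assoc)
      have "(\<Sum>j<r. a j * (F ^\<^sub>m Suc j *\<^sub>v v) $ i) = (\<Sum>j<r. a' j * (F ^\<^sub>m j *\<^sub>v v) $ i)"
        unfolding e1 e2 by (simp add: sum_distrib_left)
      thus "(F ^\<^sub>m Suc c *\<^sub>v v) $ i = kry F v r a' $ i"
        using eq i v by (simp add: kry_def)
    qed (use v F in \<open>simp add: kry_def\<close>)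
    thus ?thesis by blast
  qed
qed

lemma vec_last_append_eq:
  assumes "x \<in> carrier_vec n" "y \<in> carrier_vec m"
  shows "vec_last (x @\<^sub>v y) m = y" "vec_first (x @\<^sub>v y) n = x"
  using assms unfolding vec_last_def vec_first_def by (auto intro!: eq_vecI)

locale sys =
  fixes nx nd nu N L :: nat and A Bd Ad B :: "real mat" and um xbm :: "nat \<Rightarrow> real vec"
  assumes A: "A \<in> carrier_mat nx nx" and Bd: "Bd \<in> carrier_mat nx nd"
    and Ad: "Ad \<in> carrier_mat nd nd" and B: "B \<in> carrier_mat nx nu"
    and N: "N \<ge> 1" and L: "L \<ge> 1"
    and um_dim: "\<forall>k \<le> N + L + (nx + nd) - 2. um k \<in> carrier_vec nu"
    and xbm0: "xbm 0 \<in> carrier_vec (nx + nd)"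
    and xbm_dyn: "\<forall>k < N + L + (nx + nd) - 2. xbm (Suc k) =
        four_block_mat A Bd (0\<^sub>m nd nx) Ad *\<^sub>v xbm k + (B @\<^sub>r 0\<^sub>m nd nu) *\<^sub>v um k"
begin

abbreviation "nbar \<equiv> nx + nd"
abbreviation "T \<equiv> N + L + (nx + nd) - 2"
definition "AL = four_block_mat A Bd (0\<^sub>m nd nx) Ad"
definition "BL = B @\<^sub>r 0\<^sub>m nd nu"
abbreviation "dm0 \<equiv> vec_last (xbm 0) nd"

lemma AL: "AL \<in> carrier_mat nbar nbar" using A Bd Ad unfolding AL_def by auto
lemma BL: "BL \<in> carrier_mat nbar nu" using B unfolding BL_def by auto

lemma AL_dims[simp]: "dim_row AL = nbar" "dim_col AL = nbar" using AL by auto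
lemma BL_dims[simp]: "dim_row BL = nbar" "dim_col BL = nu" using BL by auto

lemma um: "k \<le> T \<Longrightarrow> um k \<in> carrier_vec nu" using um_dim by auto

lemma xbm: "k \<le> T \<Longrightarrow> xbm k \<in> carrier_vec nbar"
proof (induction k)
  case 0 thus ?case using xbm0 by simp
next
  case (Suc k)
  hence "xbm (Suc k) = AL *\<^sub>v xbm k + BL *\<^sub>v um k" using xbm_dyn unfolding AL_def BL_def by auto
  thus ?case using AL BL um[of k] Suc by auto
qed

lemma dyn: "k < T \<Longrightarrow> xbm (Suc k) = AL *\<^sub>v xbm k + BL *\<^sub>v um k" using xbm_dyn unfolding AL_def BL_def by auto

lemma dpart: "k \<le> T \<Longrightarrow> vec_last (xbm k) nd = Ad ^\<^sub>m k *\<^sub>v dm0"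
proof (induction k)
  case 0 thus ?case using Ad by simp
next
  case (Suc k)
  have xk: "xbm k \<in> carrier_vec nbar" using xbm Suc by simp
  define a where "a = vec_first (xbm k) nx"
  define d where "d = vec_last (xbm k) nd"
  have ad: "xbm k = a @\<^sub>v d" unfolding a_def d_def using xk by simp
  have u: "um k \<in> carrier_vec nu" using um Suc by simp
  have "xbm (Suc k) = AL *\<^sub>v (a @\<^sub>v d) + BL *\<^sub>v um k" using dyn[of k] Suc ad by simp
  also have "AL *\<^sub>v (a @\<^sub>v d) = (A *\<^sub>v a + Bd *\<^sub>v d) @\<^sub>v (0\<^sub>m nd nx *\<^sub>v a + Ad *\<^sub>v d)"
    using A Bd Ad unfolding a_def d_def AL_def by (intro four_block_mat_mult_vec) auto
  also have "BL *\<^sub>v um k = (B *\<^sub>v um k) @\<^sub>v (0\<^sub>m nd nu *\<^sub>v um k)"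
    using B u unfolding BL_def by (intro mat_mult_append) auto
  also have "0\<^sub>m nd nx *\<^sub>v a = 0\<^sub>v nd" by (intro eq_vecI) (auto simp: a_def)
  also have "0\<^sub>m nd nu *\<^sub>v um k = 0\<^sub>v nd" using u by (intro eq_vecI) auto
  finally have "xbm (Suc k) = ((A *\<^sub>v a + Bd *\<^sub>v d) @\<^sub>v (0\<^sub>v nd + Ad *\<^sub>v d)) + ((B *\<^sub>v um k) @\<^sub>v 0\<^sub>v nd)" .
  also have "\<dots> = (A *\<^sub>v a + Bd *\<^sub>v d + B *\<^sub>v um k) @\<^sub>v (0\<^sub>v nd + Ad *\<^sub>v d + 0\<^sub>v nd)"
    using A Bd Ad B u unfolding a_def d_def by (intro append_vec_add[of _ nx _ _ nd]) auto
  also have "0\<^sub>v nd + Ad *\<^sub>v d + 0\<^sub>v nd = Ad *\<^sub>v d" using Ad unfolding d_def by simp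
  finally have "xbm (Suc k) = (A *\<^sub>v a + Bd *\<^sub>v d + B *\<^sub>v um k) @\<^sub>v (Ad *\<^sub>v d)" .
  hence "vec_last (xbm (Suc k)) nd = Ad *\<^sub>v d"
    using vec_last_append_eq(1)[of "A *\<^sub>v a + Bd *\<^sub>v d + B *\<^sub>v um k" nx "Ad *\<^sub>v d" nd]
      A Bd Ad B u unfolding a_def d_def by auto
  also have "d = Ad ^\<^sub>m k *\<^sub>v dm0" using Suc unfolding d_def by simp
  also have "Ad *\<^sub>v (Ad ^\<^sub>m k *\<^sub>v dm0) = Ad ^\<^sub>m Suc k *\<^sub>v dm0"
    using pow_Suc_mult_vec[OF Ad, of dm0 k] by simp
  finally show ?case .
qed

end

lemma full_rank_orth:
  fixes M :: "real mat"
  assumes M: "M \<in> carrier_mat n k" and r: "vec_space.rank n M = n" and w: "w \<in> carrier_vec n"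
    and o: "\<forall>c<k. w \<bullet> col M c = 0"
  shows "w = 0\<^sub>v n"
proof -
  obtain g where g: "g \<in> carrier_vec k" "M *\<^sub>v g = w" using full_rank_surj[OF M r w] by auto
  have z: "transpose_mat M *\<^sub>v w = 0\<^sub>v k"
  proof (rule eq_vecI)
    fix c assume "c < dim_vec (0\<^sub>v k :: real vec)"
    hence c: "c < k" by simp
    have "(transpose_mat M *\<^sub>v w) $ c = col M c \<bullet> w" using M c by simp
    also have "\<dots> = w \<bullet> col M c" using M w by (intro comm_scalar_prod[of _ n]) auto
    finally show "(transpose_mat M *\<^sub>v w) $ c = 0\<^sub>v k $ c" using o c by simp
  qed (use M in simp)
  have "w \<bullet> w = w \<bullet> (M *\<^sub>v g)" using g by simp
  also have "\<dots> = (transpose_mat M *\<^sub>v w) \<bullet> g" using transpose_vec_mult_scalar[OF M g(1) w] by simp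
  also have "\<dots> = 0" using z g by simp
  finally have "(\<Sum>i\<in>{0..<n}. w $ i * w $ i) = 0" using w by (simp add: scalar_prod_def)
  hence "\<forall>i\<in>{0..<n}. w $ i * w $ i = 0" by (subst sum_nonneg_eq_0_iff[symmetric]) auto
  thus "w = 0\<^sub>v n" using w by (intro eq_vecI) auto
qed

lemma sum_blocks: "(\<Sum>q<L*p. f q) = (\<Sum>m<L. \<Sum>t<p. f (m*p+t))" for f :: "nat \<Rightarrow> real"
proof (induction L)
  case 0 thus ?case by simp
next
  case (Suc L)
  have "(\<Sum>q<Suc L*p. f q) = (\<Sum>q<L*p. f q) + (\<Sum>q\<in>{L*p..<L*p+p}. f q)"
    by (simp add: lessThan_atLeast0 sum.atLeastLessThan_concat add.commute)
  also have "(\<Sum>q\<in>{L*p..<L*p+p}. f q) = (\<Sum>t<p. f (L*p+t))"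
    using sum.shift_bounds_nat_ivl[of f 0 "L*p" p] by (simp add: lessThan_atLeast0 add.commute)
  finally show ?case using Suc by simp
qed

lemma kry_dot:
  assumes v: "v \<in> carrier_vec m" and F: "F \<in> carrier_mat m m" and z: "z \<in> carrier_vec m"
  shows "kry F v r a \<bullet> z = (\<Sum>j<r. a j * ((F ^\<^sub>m j *\<^sub>v v) \<bullet> z))"
proof -
  have "kry F v r a \<bullet> z = (\<Sum>i<m. (\<Sum>j<r. a j * (F ^\<^sub>m j *\<^sub>v v) $ i) * z $ i)"
    using v z by (simp add: kry_def scalar_prod_def lessThan_atLeast0)
  also have "\<dots> = (\<Sum>i<m. \<Sum>j<r. a j * ((F ^\<^sub>m j *\<^sub>v v) $ i * z $ i))"
    by (simp add: sum_distrib_right mult.assoc)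
  also have "\<dots> = (\<Sum>j<r. \<Sum>i<m. a j * ((F ^\<^sub>m j *\<^sub>v v) $ i * z $ i))"
    by (rule sum.swap)
  also have "\<dots> = (\<Sum>j<r. a j * ((F ^\<^sub>m j *\<^sub>v v) \<bullet> z))"
    using z by (simp add: scalar_prod_def sum_distrib_left lessThan_atLeast0)
  finally show ?thesis .
qed

context sys begin

definition phi :: "real vec \<Rightarrow> nat \<Rightarrow> real vec \<Rightarrow> real" where
  "phi \<xi> k z = \<xi> \<bullet> (AL ^\<^sub>m k *\<^sub>v z)"

definition ev :: "real vec \<Rightarrow> nat \<Rightarrow> real vec" where
  "ev \<xi> k = vec nu (\<lambda>t. phi \<xi> k (col BL t))"

lemma ev_carrier[simp]: "ev \<xi> k \<in> carrier_vec nu" unfolding ev_def by simp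

lemma phi_AL: "z \<in> carrier_vec nbar \<Longrightarrow> phi \<xi> k (AL *\<^sub>v z) = phi \<xi> (Suc k) z"
  unfolding phi_def using AL by (simp add: assoc_mult_mat_vec[of _ nbar nbar _ nbar])

lemma phi_add: "x \<in> carrier_vec nbar \<Longrightarrow> y \<in> carrier_vec nbar \<Longrightarrow> \<xi> \<in> carrier_vec nbar \<Longrightarrow>
   phi \<xi> k (x + y) = phi \<xi> k x + phi \<xi> k y"
proof -
  assume x: "x \<in> carrier_vec nbar" and y: "y \<in> carrier_vec nbar" and xi: "\<xi> \<in> carrier_vec nbar"
  have P: "AL ^\<^sub>m k \<in> carrier_mat nbar nbar" using AL by simp
  have "AL ^\<^sub>m k *\<^sub>v (x + y) = AL ^\<^sub>m k *\<^sub>v x + AL ^\<^sub>m k *\<^sub>v y"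
    using mult_add_distrib_mat_vec[OF P x y] .
  moreover have "\<xi> \<bullet> (AL ^\<^sub>m k *\<^sub>v x + AL ^\<^sub>m k *\<^sub>v y) = \<xi> \<bullet> (AL ^\<^sub>m k *\<^sub>v x) + \<xi> \<bullet> (AL ^\<^sub>m k *\<^sub>v y)"
    using mult_mat_vec_carrier[OF P x] mult_mat_vec_carrier[OF P y] xi by (intro scalar_prod_add_distrib[of _ nbar])
  ultimately show ?thesis unfolding phi_def by simp
qed

lemma phi_BL:
  assumes \<xi>: "\<xi> \<in> carrier_vec nbar" and u: "u \<in> carrier_vec nu"
  shows "phi \<xi> k (BL *\<^sub>v u) = ev \<xi> k \<bullet> u"
proof -
  let ?M = "AL ^\<^sub>m k * BL"
  have M: "?M \<in> carrier_mat nbar nu" using AL BL by auto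
  have "phi \<xi> k (BL *\<^sub>v u) = \<xi> \<bullet> (?M *\<^sub>v u)"
    unfolding phi_def using AL BL u by (simp add: assoc_mult_mat_vec[of _ nbar nbar _ nu])
  also have "\<dots> = (\<Sum>s<nbar. \<xi> $ s * (\<Sum>t<nu. ?M $$ (s,t) * u $ t))"
    using M \<xi> u by (simp add: scalar_prod_def row_def lessThan_atLeast0)
  also have "\<dots> = (\<Sum>t<nu. (\<Sum>s<nbar. \<xi> $ s * ?M $$ (s,t)) * u $ t)"
  proof -
    have "(\<Sum>s<nbar. \<xi> $ s * (\<Sum>t<nu. ?M $$ (s,t) * u $ t)) = (\<Sum>s<nbar. \<Sum>t<nu. \<xi> $ s * ?M $$ (s,t) * u $ t)"
      by (simp add: sum_distrib_left mult.assoc)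
    also have "\<dots> = (\<Sum>t<nu. \<Sum>s<nbar. \<xi> $ s * ?M $$ (s,t) * u $ t)" by (rule sum.swap)
    also have "\<dots> = (\<Sum>t<nu. (\<Sum>s<nbar. \<xi> $ s * ?M $$ (s,t)) * u $ t)" by (simp add: sum_distrib_right)
    finally show ?thesis .
  qed
  also have "\<dots> = ev \<xi> k \<bullet> u"
  proof -
    have "\<And>t. t < nu \<Longrightarrow> phi \<xi> k (col BL t) = (\<Sum>s<nbar. \<xi> $ s * ?M $$ (s,t))"
    proof -
      fix t assume t: "t < nu"
      have "AL ^\<^sub>m k *\<^sub>v col BL t = col ?M t" using AL BL t by (simp add: col_mult2[of _ nbar nbar _ nu])
      thus "phi \<xi> k (col BL t) = (\<Sum>s<nbar. \<xi> $ s * ?M $$ (s,t))"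
        unfolding phi_def using \<xi> M t by (simp add: scalar_prod_def lessThan_atLeast0)
    qed
    thus ?thesis using u by (simp add: ev_def scalar_prod_def lessThan_atLeast0)
  qed
  finally show ?thesis .
qed

lemma phi_xbm_shift:
  assumes \<xi>: "\<xi> \<in> carrier_vec nbar" and ci: "c + i \<le> T"
  shows "phi \<xi> k (xbm (c+i)) = phi \<xi> (k+i) (xbm c) + (\<Sum>l<i. ev \<xi> (k+i-1-l) \<bullet> um (c+l))"
  using ci
proof (induction i arbitrary: k)
  case 0 thus ?case by simp
next
  case (Suc i)
  have x: "xbm (c+i) \<in> carrier_vec nbar" using xbm Suc by simp
  have u: "um (c+i) \<in> carrier_vec nu" using um Suc by simp
  have "phi \<xi> k (xbm (c + Suc i)) = phi \<xi> k (AL *\<^sub>v xbm (c+i) + BL *\<^sub>v um (c+i))"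
    using dyn[of "c+i"] Suc by simp
  also have "\<dots> = phi \<xi> (Suc k) (xbm (c+i)) + ev \<xi> k \<bullet> um (c+i)"
    using x u AL BL \<xi> by (simp add: phi_add phi_AL phi_BL)
  also have "phi \<xi> (Suc k) (xbm (c+i)) = phi \<xi> (Suc k + i) (xbm c) + (\<Sum>l<i. ev \<xi> (Suc k+i-1-l) \<bullet> um (c+l))"
    using Suc by simp
  finally show ?case by (simp add: add.commute)
qed

lemma phi_zeta:
  assumes \<xi>: "\<xi> \<in> carrier_vec nbar" and z: "z \<in> carrier_vec nbar"
  shows "(transpose_mat AL ^\<^sub>m k *\<^sub>v \<xi>) \<bullet> z = phi \<xi> k z"
  using z
proof (induction k arbitrary: z)
  case 0 thus ?case using \<xi> by (simp add: phi_def)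
next
  case (Suc k)
  have ALT: "transpose_mat AL \<in> carrier_mat nbar nbar" using AL by simp
  have "(transpose_mat AL ^\<^sub>m Suc k *\<^sub>v \<xi>) \<bullet> z = (transpose_mat AL *\<^sub>v (transpose_mat AL ^\<^sub>m k *\<^sub>v \<xi>)) \<bullet> z"
    using pow_Suc_mult_vec[OF ALT \<xi>] by simp
  also have "\<dots> = (transpose_mat AL ^\<^sub>m k *\<^sub>v \<xi>) \<bullet> (AL *\<^sub>v z)"
    using transpose_vec_mult_scalar[OF AL Suc.prems mult_mat_vec_carrier[OF pow_carrier_mat[OF ALT] \<xi>, of k]] by simp
  also have "\<dots> = phi \<xi> k (AL *\<^sub>v z)" using Suc.IH[of "AL *\<^sub>v z"] AL Suc.prems by simp
  also have "\<dots> = phi \<xi> (Suc k) z" using phi_AL Suc.prems by simp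
  finally show ?case .
qed

lemma phi_dep:
  assumes \<xi>: "\<xi> \<in> carrier_vec nbar"
  shows "\<exists>r \<le> nbar. \<exists>\<beta>. (\<forall>z \<in> carrier_vec nbar. phi \<xi> r z = (\<Sum>j<r. \<beta> j * phi \<xi> j z))
     \<and> (\<forall>k. \<exists>a. \<forall>z \<in> carrier_vec nbar. phi \<xi> k z = (\<Sum>j<r. a j * phi \<xi> j z))"
proof -
  have ALT: "transpose_mat AL \<in> carrier_mat nbar nbar" using AL by simp
  obtain r \<beta> where r: "r \<le> nbar" "transpose_mat AL ^\<^sub>m r *\<^sub>v \<xi> = kry (transpose_mat AL) \<xi> r \<beta>"
    using krylov_dep[OF ALT \<xi>] by blast
  have conv: "phi \<xi> k z = (\<Sum>j<r. a j * phi \<xi> j z)"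
    if "transpose_mat AL ^\<^sub>m k *\<^sub>v \<xi> = kry (transpose_mat AL) \<xi> r a" "z \<in> carrier_vec nbar" for k a z
  proof -
    have "phi \<xi> k z = kry (transpose_mat AL) \<xi> r a \<bullet> z" using phi_zeta[OF \<xi> that(2), of k] unfolding that(1) by simp
    also have "\<dots> = (\<Sum>j<r. a j * phi \<xi> j z)" using kry_dot[OF \<xi> ALT that(2)] phi_zeta[OF \<xi> that(2)] by simp
    finally show ?thesis .
  qed
  show ?thesis
  proof (intro exI conjI)
    show "r \<le> nbar" by fact
    show "\<forall>z \<in> carrier_vec nbar. phi \<xi> r z = (\<Sum>j<r. \<beta> j * phi \<xi> j z)" using conv r(2) by blast
    show "\<forall>k. \<exists>a. \<forall>z \<in> carrier_vec nbar. phi \<xi> k z = (\<Sum>j<r. a j * phi \<xi> j z)"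
    proof
      fix k
      obtain a where "transpose_mat AL ^\<^sub>m k *\<^sub>v \<xi> = kry (transpose_mat AL) \<xi> r a"
        using krylov_all[OF ALT \<xi> r(2)] by blast
      thus "\<exists>a. \<forall>z \<in> carrier_vec nbar. phi \<xi> k z = (\<Sum>j<r. a j * phi \<xi> j z)" using conv by blast
    qed
  qed
qed

end

lemma sum_if_less: "i \<le> n \<Longrightarrow> (\<Sum>m<n. if m < i then f m else 0) = (\<Sum>m<i. f m)" for f :: "nat \<Rightarrow> real"
proof -
  assume "i \<le> n"
  hence "{m \<in> {..<n}. m < i} = {..<i}" by auto
  thus ?thesis using sum.inter_filter[of "{..<n}" f "\<lambda>m. m < i"] by simp
qed

lemma sum_if_shift: "i + L \<le> n \<Longrightarrow> (\<Sum>m<n. if i \<le> m \<and> m - i < L then f (m - i) else 0) = (\<Sum>j<L. f j)"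
  for f :: "nat \<Rightarrow> real"
proof -
  assume "i + L \<le> n"
  hence "{m \<in> {..<n}. i \<le> m \<and> m - i < L} = {i..<i+L}" by auto
  hence "(\<Sum>m<n. if i \<le> m \<and> m - i < L then f (m - i) else 0) = (\<Sum>m\<in>{i..<i+L}. f (m - i))"
    using sum.inter_filter[of "{..<n}" "\<lambda>m. f (m - i)" "\<lambda>m. i \<le> m \<and> m - i < L"] by simp
  also have "\<dots> = (\<Sum>j\<in>{0..<L}. f j)"
    using sum.shift_bounds_nat_ivl[of "\<lambda>m. f (m - i)" 0 i L] by (simp add: add.commute)
  finally show ?thesis by (simp add: lessThan_atLeast0)
qed

lemma divmod_block: "t < p \<Longrightarrow> (m * p + t) div p = m \<and> (m * p + t) mod p = t" for t p m :: nat
  by auto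

context sys begin

lemma phi0: "z \<in> carrier_vec nbar \<Longrightarrow> phi \<xi> 0 z = \<xi> \<bullet> z"
  unfolding phi_def by simp

lemma lk_eta_ev:
  assumes \<xi>: "\<xi> \<in> carrier_vec nbar" and \<eta>: "\<forall>j<L. \<eta> j \<in> carrier_vec nu"
    and R: "\<forall>c < N + nbar. \<xi> \<bullet> xbm c + (\<Sum>j<L. \<eta> j \<bullet> um (c+j)) = 0"
    and PE: "vec_space.rank ((L+nbar)*nu) (block_hankel nu 0 (L+nbar) N um) = (L+nbar)*nu"
  shows "(\<forall>j<L. \<forall>t<nu. \<eta> j $ t = 0) \<and> (\<forall>k. \<forall>t<nu. ev \<xi> k $ t = 0)"
proof -
  obtain r \<beta> where r: "r \<le> nbar" and dep: "\<forall>z\<in>carrier_vec nbar. phi \<xi> r z = (\<Sum>j<r. \<beta> j * phi \<xi> j z)"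
     and allk: "\<forall>k. \<exists>a. \<forall>z\<in>carrier_vec nbar. phi \<xi> k z = (\<Sum>j<r. a j * phi \<xi> j z)"
    using phi_dep[OF \<xi>] by blast
  define \<alpha> where "\<alpha> i = (if i = r then 1 else - \<beta> i)" for i
  define G where "G i m t = (if m < i then ev \<xi> (i-1-m) $ t else 0) + (if i \<le> m \<and> m - i < L then \<eta> (m-i) $ t else 0)" for i m t
  define \<gamma> where "\<gamma> m t = (\<Sum>i<Suc r. \<alpha> i * G i m t)" for m t
  define S where "S c i = (\<Sum>m<L+nbar. \<Sum>t<nu. G i m t * um (c+m) $ t)" for c i
  have Ri: "phi \<xi> i (xbm c) + S c i = 0" if c: "c < N" and i: "i \<le> r" for c i
  proof -
    have ci: "c + i \<le> T" using c i r L by linarith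
    have R': "\<xi> \<bullet> xbm (c+i) + (\<Sum>j<L. \<eta> j \<bullet> um (c+i+j)) = 0" using R[rule_format, of "c+i"] c i r by (simp add: add.assoc)
    have "\<xi> \<bullet> xbm (c+i) = phi \<xi> 0 (xbm (c+i))" using phi0 xbm ci by simp
    also have "\<dots> = phi \<xi> i (xbm c) + (\<Sum>l<i. ev \<xi> (i-1-l) \<bullet> um (c+l))" using phi_xbm_shift[OF \<xi> ci, of 0] by simp
    finally have e1: "\<xi> \<bullet> xbm (c+i) = phi \<xi> i (xbm c) + (\<Sum>l<i. ev \<xi> (i-1-l) \<bullet> um (c+l))" .
    have p1: "(\<Sum>l<i. ev \<xi> (i-1-l) \<bullet> um (c+l)) =
        (\<Sum>m<L+nbar. \<Sum>t<nu. (if m < i then ev \<xi> (i-1-m) $ t else 0) * um (c+m) $ t)"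
    proof -
      have "(\<Sum>m<L+nbar. \<Sum>t<nu. (if m < i then ev \<xi> (i-1-m) $ t else 0) * um (c+m) $ t)
          = (\<Sum>m<L+nbar. if m < i then (\<Sum>t<nu. ev \<xi> (i-1-m) $ t * um (c+m) $ t) else 0)"
        by (rule sum.cong) auto
      also have "\<dots> = (\<Sum>m<i. (\<Sum>t<nu. ev \<xi> (i-1-m) $ t * um (c+m) $ t))"
        using i r by (intro sum_if_less) linarith
      also have "\<dots> = (\<Sum>l<i. ev \<xi> (i-1-l) \<bullet> um (c+l))"
      proof (rule sum.cong[OF refl])
        fix l assume "l \<in> {..<i}"
        hence "c + l \<le> T" using ci by auto
        hence "um (c+l) \<in> carrier_vec nu" using um by auto
        thus "(\<Sum>t<nu. ev \<xi> (i-1-l) $ t * um (c+l) $ t) = ev \<xi> (i-1-l) \<bullet> um (c+l)"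
          by (simp add: scalar_prod_def lessThan_atLeast0)
      qed
      finally show ?thesis by simp
    qed
    have p2: "(\<Sum>j<L. \<eta> j \<bullet> um (c+i+j)) =
        (\<Sum>m<L+nbar. \<Sum>t<nu. (if i \<le> m \<and> m - i < L then \<eta> (m-i) $ t else 0) * um (c+m) $ t)"
    proof -
      have "(\<Sum>m<L+nbar. \<Sum>t<nu. (if i \<le> m \<and> m - i < L then \<eta> (m-i) $ t else 0) * um (c+m) $ t)
          = (\<Sum>m<L+nbar. if i \<le> m \<and> m - i < L then (\<Sum>t<nu. \<eta> (m-i) $ t * um (c+i+(m-i)) $ t) else 0)"
        by (rule sum.cong) auto
      also have "\<dots> = (\<Sum>j<L. (\<Sum>t<nu. \<eta> j $ t * um (c+i+j) $ t))"
        using i r by (intro sum_if_shift[where f = "\<lambda>j. \<Sum>t<nu. \<eta> j $ t * um (c+i+j) $ t"]) linarith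
      also have "\<dots> = (\<Sum>j<L. \<eta> j \<bullet> um (c+i+j))"
      proof (rule sum.cong[OF refl])
        fix j assume "j \<in> {..<L}"
        hence "c + i + j \<le> T" using c i r by auto
        hence "um (c+i+j) \<in> carrier_vec nu" using um by auto
        thus "(\<Sum>t<nu. \<eta> j $ t * um (c+i+j) $ t) = \<eta> j \<bullet> um (c+i+j)"
          by (simp add: scalar_prod_def lessThan_atLeast0)
      qed
      finally show ?thesis by simp
    qed
    have "S c i = (\<Sum>l<i. ev \<xi> (i-1-l) \<bullet> um (c+l)) + (\<Sum>j<L. \<eta> j \<bullet> um (c+i+j))"
      unfolding p1 p2 S_def G_def by (simp add: distrib_right sum.distrib)
    thus ?thesis using R' e1 by simp
  qed
  have comb: "(\<Sum>m<L+nbar. \<Sum>t<nu. \<gamma> m t * um (c+m) $ t) = 0" if c: "c < N" for c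
  proof -
    have xc: "xbm c \<in> carrier_vec nbar" using c L by (intro xbm) linarith
    have a1: "(\<Sum>i<Suc r. \<alpha> i * phi \<xi> i (xbm c)) = 0"
      using dep xc by (simp add: \<alpha>_def sum_negf)
    have a2: "(\<Sum>i<Suc r. \<alpha> i * (phi \<xi> i (xbm c) + S c i)) = 0"
      using Ri[OF c] by simp
    have a3: "(\<Sum>i<Suc r. \<alpha> i * S c i) = 0"
      using a1 a2 by (simp add: distrib_left sum.distrib)
    have "(\<Sum>i<Suc r. \<alpha> i * S c i) = (\<Sum>i<Suc r. \<Sum>m<L+nbar. \<Sum>t<nu. \<alpha> i * G i m t * um (c+m) $ t)"
      unfolding S_def by (simp add: sum_distrib_left mult.assoc)
    also have "\<dots> = (\<Sum>m<L+nbar. \<Sum>i<Suc r. \<Sum>t<nu. \<alpha> i * G i m t * um (c+m) $ t)"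
      by (rule sum.swap)
    also have "\<dots> = (\<Sum>m<L+nbar. \<Sum>t<nu. \<Sum>i<Suc r. \<alpha> i * G i m t * um (c+m) $ t)"
      by (rule sum.cong[OF refl], rule sum.swap)
    also have "\<dots> = (\<Sum>m<L+nbar. \<Sum>t<nu. \<gamma> m t * um (c+m) $ t)"
      unfolding \<gamma>_def by (simp del: sum.lessThan_Suc add: sum_distrib_right)
    finally show ?thesis using a3 by simp
  qed
  define H where "H = block_hankel nu 0 (L+nbar) N um"
  have H: "H \<in> carrier_mat ((L+nbar)*nu) N" unfolding H_def block_hankel_def by simp
  define w where "w = vec ((L+nbar)*nu) (\<lambda>q. \<gamma> (q div nu) (q mod nu))"
  have wC: "w \<in> carrier_vec ((L+nbar)*nu)" unfolding w_def by simp
  have "\<forall>c<N. w \<bullet> col H c = 0"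
  proof (intro allI impI)
    fix c assume c: "c < N"
    have "w \<bullet> col H c = (\<Sum>q<(L+nbar)*nu. \<gamma> (q div nu) (q mod nu) * um (q div nu + c) $ (q mod nu))"
      using c H by (simp add: w_def H_def block_hankel_def scalar_prod_def lessThan_atLeast0)
    also have "\<dots> = (\<Sum>m<L+nbar. \<Sum>t<nu. \<gamma> m t * um (c+m) $ t)"
      by (subst sum_blocks) (auto intro!: sum.cong simp: add.commute)
    finally show "w \<bullet> col H c = 0" using comb[OF c] by simp
  qed
  hence w0: "w = 0\<^sub>v ((L+nbar)*nu)" using full_rank_orth[OF H _ wC] PE unfolding H_def by blast
  have gz: "\<gamma> m t = 0" if "m < L + nbar" "t < nu" for m t
  proof -
    have q: "m * nu + t < (L+nbar)*nu"
    proof -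
      have "m * nu + t < m * nu + nu" using that by simp
      also have "\<dots> = Suc m * nu" by simp
      also have "\<dots> \<le> (L+nbar) * nu" using that by (intro mult_le_mono1) simp
      finally show ?thesis .
    qed
    have "w $ (m * nu + t) = 0" using w0 q by simp
    thus ?thesis using q that unfolding w_def by simp
  qed
  have etaz: "\<forall>t<nu. \<eta> j $ t = 0" if "j < L" for j
    using that
  proof (induction "L - j" arbitrary: j rule: less_induct)
    case less
    show ?case
    proof (intro allI impI)
      fix t assume t: "t < nu"
      have jr: "j + r < L + nbar" using less.prems r by linarith
      have "\<gamma> (j+r) t = (\<Sum>i<r. \<alpha> i * G i (j+r) t) + \<alpha> r * G r (j+r) t" unfolding \<gamma>_def by simp
      also have "(\<Sum>i<r. \<alpha> i * G i (j+r) t) = 0"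
      proof (rule sum.neutral, intro ballI)
        fix i assume "i \<in> {..<r}" hence i: "i < r" by simp
        have "G i (j+r) t = 0"
        proof (cases "j + r - i < L")
          case True
          have "\<eta> (j+r-i) $ t = 0" using less(1)[of "j+r-i"] True i t by auto
          thus ?thesis unfolding G_def using i by auto
        next
          case False thus ?thesis unfolding G_def using i by auto
        qed
        thus "\<alpha> i * G i (j+r) t = 0" by simp
      qed
      also have "\<alpha> r * G r (j+r) t = \<eta> j $ t" unfolding \<alpha>_def G_def using less.prems by simp
      finally show "\<eta> j $ t = 0" using gz[OF jr t] by simp
    qed
  qed
  have evz: "\<forall>t<nu. ev \<xi> k $ t = 0" if "k < r" for k
    using that
  proof (induction k rule: less_induct)
    case (less k)
    show ?case
    proof (intro allI impI)
      fix t assume t: "t < nu"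
      define m where "m = r - 1 - k"
      have mr: "m < L + nbar" "m < r" using less.prems r L unfolding m_def by linarith+
      have G2: "(if i \<le> m \<and> m - i < L then \<eta> (m-i) $ t else 0) = 0" for i
        using etaz t by auto
      have "\<gamma> m t = (\<Sum>i<r. \<alpha> i * G i m t) + \<alpha> r * G r m t" unfolding \<gamma>_def by simp
      also have "(\<Sum>i<r. \<alpha> i * G i m t) = 0"
      proof (rule sum.neutral, intro ballI)
        fix i assume "i \<in> {..<r}" hence i: "i < r" by simp
        have "G i m t = 0"
        proof (cases "m < i")
          case True
          have "i - 1 - m < k" using True i less.prems unfolding m_def by linarith
          hence "ev \<xi> (i-1-m) $ t = 0" using less(1)[of "i-1-m"] less.prems t by auto
          thus ?thesis unfolding G_def using G2[of i] True by simp
        next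
          case False thus ?thesis unfolding G_def using G2[of i] by simp
        qed
        thus "\<alpha> i * G i m t = 0" by simp
      qed
      also have "\<alpha> r * G r m t = ev \<xi> k $ t"
      proof -
        have "r - 1 - m = k" using less.prems unfolding m_def by linarith
        thus ?thesis unfolding \<alpha>_def G_def using G2[of r] mr by simp
      qed
      finally show "ev \<xi> k $ t = 0" using gz[OF mr(1) t] by simp
    qed
  qed
  have "\<forall>k. \<forall>t<nu. ev \<xi> k $ t = 0"
  proof (intro allI impI)
    fix k t assume t: "t < nu"
    obtain a where a: "\<forall>z\<in>carrier_vec nbar. phi \<xi> k z = (\<Sum>j<r. a j * phi \<xi> j z)" using allk by blast
    have cB: "col BL t \<in> carrier_vec nbar" using col_dim[of BL t] by simp
    have "ev \<xi> k $ t = phi \<xi> k (col BL t)" unfolding ev_def using t by simp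
    also have "\<dots> = (\<Sum>j<r. a j * phi \<xi> j (col BL t))" using a cB by simp
    also have "\<dots> = (\<Sum>j<r. a j * ev \<xi> j $ t)" unfolding ev_def using t by simp
    also have "\<dots> = 0" using evz t by simp
    finally show "ev \<xi> k $ t = 0" .
  qed
  thus ?thesis using etaz by blast
qed

end

context sys begin

lemma AL_pow_x:
  assumes y: "y \<in> carrier_vec nx"
  shows "AL ^\<^sub>m k *\<^sub>v (y @\<^sub>v 0\<^sub>v nd) = (A ^\<^sub>m k *\<^sub>v y) @\<^sub>v 0\<^sub>v nd"
  using y
proof (induction k arbitrary: y)
  case 0 thus ?case using A by simp
next
  case (Suc k)
  have z: "y @\<^sub>v 0\<^sub>v nd \<in> carrier_vec nbar" using Suc.prems by simp
  have "AL *\<^sub>v (y @\<^sub>v 0\<^sub>v nd) = (A *\<^sub>v y + Bd *\<^sub>v 0\<^sub>v nd) @\<^sub>v (0\<^sub>m nd nx *\<^sub>v y + Ad *\<^sub>v 0\<^sub>v nd)"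
    unfolding AL_def using A Bd Ad Suc.prems by (intro four_block_mat_mult_vec) auto
  also have "\<dots> = (A *\<^sub>v y) @\<^sub>v 0\<^sub>v nd"
  proof -
    have "Bd *\<^sub>v 0\<^sub>v nd = 0\<^sub>v nx" using Bd by (intro eq_vecI) auto
    moreover have "0\<^sub>m nd nx *\<^sub>v y = 0\<^sub>v nd" using Suc.prems by (intro eq_vecI) auto
    moreover have "Ad *\<^sub>v 0\<^sub>v nd = 0\<^sub>v nd" using Ad by (intro eq_vecI) auto
    ultimately show ?thesis using A Suc.prems by simp
  qed
  finally have e: "AL *\<^sub>v (y @\<^sub>v 0\<^sub>v nd) = (A *\<^sub>v y) @\<^sub>v 0\<^sub>v nd" .
  have "AL ^\<^sub>m Suc k *\<^sub>v (y @\<^sub>v 0\<^sub>v nd) = AL ^\<^sub>m k *\<^sub>v (AL *\<^sub>v (y @\<^sub>v 0\<^sub>v nd))"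
    using AL z by (simp add: assoc_mult_mat_vec[of _ nbar nbar _ nbar])
  also have "\<dots> = (A ^\<^sub>m k *\<^sub>v (A *\<^sub>v y)) @\<^sub>v 0\<^sub>v nd" using e Suc.IH[of "A *\<^sub>v y"] A Suc.prems by simp
  also have "A ^\<^sub>m k *\<^sub>v (A *\<^sub>v y) = A ^\<^sub>m Suc k *\<^sub>v y"
    using A Suc.prems by (simp add: assoc_mult_mat_vec[of _ nx nx _ nx])
  finally show ?case .
qed

lemma col_BL: "t < nu \<Longrightarrow> col BL t = col B t @\<^sub>v 0\<^sub>v nd"
  unfolding BL_def append_rows_def using B by (intro eq_vecI) auto

lemma ev_x:
  assumes \<xi>: "\<xi> \<in> carrier_vec nbar" and t: "t < nu"
  shows "ev \<xi> k $ t = vec_first \<xi> nx \<bullet> (A ^\<^sub>m k *\<^sub>v col B t)"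
proof -
  have cB: "col B t \<in> carrier_vec nx" using B col_dim[of B t] by simp
  have "ev \<xi> k $ t = \<xi> \<bullet> ((A ^\<^sub>m k *\<^sub>v col B t) @\<^sub>v 0\<^sub>v nd)"
    unfolding ev_def phi_def using t col_BL AL_pow_x[OF cB] by simp
  also have "\<xi> \<bullet> ((A ^\<^sub>m k *\<^sub>v col B t) @\<^sub>v 0\<^sub>v nd)
      = vec_first \<xi> nx \<bullet> (A ^\<^sub>m k *\<^sub>v col B t) + vec_last \<xi> nd \<bullet> 0\<^sub>v nd"
  proof -
    have sp: "\<xi> = vec_first \<xi> nx @\<^sub>v vec_last \<xi> nd" using \<xi> by simp
    show ?thesis
      by (subst sp, rule scalar_prod_append[of _ nx _ nd])
        (use mult_mat_vec_carrier[OF pow_carrier_mat[OF A] cB] in auto)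
  qed
  finally show ?thesis by simp
qed

lemma col_ctrb:
  assumes q: "q < nx * nu"
  shows "col (ctrb_mat A B) q = A ^\<^sub>m (q div nu) *\<^sub>v col B (q mod nu)"
proof -
  have nu: "nu > 0" using q by (cases nu) auto
  show ?thesis unfolding ctrb_mat_def using A B q nu
    by (intro eq_vecI) (auto simp: scalar_prod_def)
qed

lemma lk_full:
  assumes \<xi>: "\<xi> \<in> carrier_vec nbar" and \<eta>: "\<forall>j<L. \<eta> j \<in> carrier_vec nu"
    and R: "\<forall>c < N + nbar. \<xi> \<bullet> xbm c + (\<Sum>j<L. \<eta> j \<bullet> um (c+j)) = 0"
    and PE: "vec_space.rank ((L+nbar)*nu) (block_hankel nu 0 (L+nbar) N um) = (L+nbar)*nu"
    and ctrb: "vec_space.rank nx (ctrb_mat A B) = nx"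
  shows "(\<forall>j<L. \<eta> j = 0\<^sub>v nu) \<and> vec_first \<xi> nx = 0\<^sub>v nx
     \<and> (\<forall>c < N + nbar. vec_last \<xi> nd \<bullet> (Ad ^\<^sub>m c *\<^sub>v dm0) = 0)"
proof -
  note lk = lk_eta_ev[OF \<xi> \<eta> R PE]
  have e0: "\<forall>j<L. \<eta> j = 0\<^sub>v nu"
    using lk \<eta> by (auto intro!: eq_vecI)
  have M: "ctrb_mat A B \<in> carrier_mat nx (nx * nu)" unfolding ctrb_mat_def using A B by simp
  have x0: "vec_first \<xi> nx = 0\<^sub>v nx"
  proof (rule full_rank_orth[OF M ctrb])
    show "vec_first \<xi> nx \<in> carrier_vec nx" by simp
    show "\<forall>c<nx * nu. vec_first \<xi> nx \<bullet> col (ctrb_mat A B) c = 0"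
    proof (intro allI impI)
      fix q assume q: "q < nx * nu"
      have nu: "nu > 0" using q by (cases nu) auto
      have "vec_first \<xi> nx \<bullet> col (ctrb_mat A B) q = ev \<xi> (q div nu) $ (q mod nu)"
        using col_ctrb[OF q] ev_x[OF \<xi>, of "q mod nu" "q div nu"] nu by simp
      thus "vec_first \<xi> nx \<bullet> col (ctrb_mat A B) q = 0" using lk nu by simp
    qed
  qed
  have "\<forall>c < N + nbar. vec_last \<xi> nd \<bullet> (Ad ^\<^sub>m c *\<^sub>v dm0) = 0"
  proof (intro allI impI)
    fix c assume c: "c < N + nbar"
    have cT: "c \<le> T" using c L by linarith
    have xc: "xbm c \<in> carrier_vec nbar" using xbm cT by simp
    have "(\<Sum>j<L. \<eta> j \<bullet> um (c+j)) = 0"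
    proof (rule sum.neutral, intro ballI)
      fix j assume "j \<in> {..<L}"
      hence "\<eta> j = 0\<^sub>v nu" "c + j \<le> T" using e0 c by auto
      thus "\<eta> j \<bullet> um (c+j) = 0" using um by simp
    qed
    hence "\<xi> \<bullet> xbm c = 0" using R[rule_format, OF c] by simp
    moreover have "\<xi> \<bullet> xbm c = vec_first \<xi> nx \<bullet> vec_first (xbm c) nx + vec_last \<xi> nd \<bullet> vec_last (xbm c) nd"
    proof -
      have "\<xi> \<bullet> xbm c = (vec_first \<xi> nx @\<^sub>v vec_last \<xi> nd) \<bullet> (vec_first (xbm c) nx @\<^sub>v vec_last (xbm c) nd)"
        using \<xi> xc by simp
      thus ?thesis by (subst (asm) scalar_prod_append[of _ nx _ nd]) auto
    qed
    ultimately show "vec_last \<xi> nd \<bullet> (Ad ^\<^sub>m c *\<^sub>v dm0) = 0" using x0 dpart[OF cT] by simp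
  qed
  thus ?thesis using e0 x0 by blast
qed

end

lemma col_append_rows:
  assumes "P \<in> carrier_mat n1 k" "Q \<in> carrier_mat n2 k" "c < k"
  shows "col (P @\<^sub>r Q) c = col P c @\<^sub>v col Q c"
  using assms unfolding append_rows_def by (intro eq_vecI) auto

lemma stack_dot:
  assumes w: "w \<in> carrier_vec (L * p)" and f: "\<forall>j<L. f (c + j) \<in> carrier_vec p"
  shows "w \<bullet> stack p c L f = (\<Sum>j<L. vec p (\<lambda>t. w $ (j*p+t)) \<bullet> f (c + j))"
proof -
  have "w \<bullet> stack p c L f = (\<Sum>q<L*p. w $ q * f (c + q div p) $ (q mod p))"
    using w by (simp add: stack_def scalar_prod_def lessThan_atLeast0)
  also have "\<dots> = (\<Sum>j<L. \<Sum>t<p. w $ (j*p+t) * f (c + j) $ t)"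
    by (subst sum_blocks) (auto intro!: sum.cong)
  also have "\<dots> = (\<Sum>j<L. vec p (\<lambda>t. w $ (j*p+t)) \<bullet> f (c + j))"
    using f by (intro sum.cong[OF refl]) (auto simp: scalar_prod_def lessThan_atLeast0)
  finally show ?thesis .
qed

context sys begin

definition Kd :: "real mat" where "Kd = mat nd nd (\<lambda>(r, c). (Ad ^\<^sub>m c *\<^sub>v dm0) $ r)"

lemma Kd: "Kd \<in> carrier_mat nd nd" unfolding Kd_def by simp

lemma col_Kd: "c < nd \<Longrightarrow> col Kd c = Ad ^\<^sub>m c *\<^sub>v dm0"
  unfolding Kd_def using Ad by (intro eq_vecI) auto

definition "Hx = block_hankel nbar 0 1 (N + nbar) xbm"
definition "Hu = block_hankel nu 0 L (N + nbar) um"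

lemma Hx: "Hx \<in> carrier_mat nbar (N + nbar)" unfolding Hx_def block_hankel_def by simp
lemma Hu: "Hu \<in> carrier_mat (L * nu) (N + nbar)" unfolding Hu_def block_hankel_def by simp

lemma col_Hx: "c < N + nbar \<Longrightarrow> col Hx c = xbm c"
proof -
  assume c: "c < N + nbar"
  hence "xbm c \<in> carrier_vec nbar" using xbm L by simp
  thus ?thesis unfolding Hx_def block_hankel_def using c by (intro eq_vecI) auto
qed

lemma col_Hu: "c < N + nbar \<Longrightarrow> col Hu c = stack nu c L um"
  unfolding Hu_def block_hankel_def stack_def by (intro eq_vecI) (auto simp: add.commute add.left_commute)

lemma part2:
  assumes PE: "vec_space.rank ((L+nbar)*nu) (block_hankel nu 0 (L+nbar) N um) = (L+nbar)*nu"
    and ctrb: "vec_space.rank nx (ctrb_mat A B) = nx"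
    and x0: "x0 \<in> carrier_vec nx" and d0: "d0 \<in> colspace Kd"
    and u: "\<forall>k<L. u k \<in> carrier_vec nu"
  shows "\<exists>g \<in> carrier_vec (N + nbar). (Hx @\<^sub>r Hu) *\<^sub>v g = (x0 @\<^sub>v d0) @\<^sub>v stack nu 0 L u"
proof (rule fredholm)
  show M: "Hx @\<^sub>r Hu \<in> carrier_mat (nbar + L * nu) (N + nbar)" using Hx Hu by auto
  obtain gd where gd: "gd \<in> carrier_vec nd" "d0 = Kd *\<^sub>v gd" using d0 Kd unfolding colspace_def by auto
  have d0C: "d0 \<in> carrier_vec nd" using gd Kd by simp
  show "(x0 @\<^sub>v d0) @\<^sub>v stack nu 0 L u \<in> carrier_vec (nbar + L * nu)"
    using x0 d0C by (simp add: stack_def)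
  fix w assume w: "w \<in> carrier_vec (nbar + L * nu)"
    and o: "\<forall>c<N + nbar. w \<bullet> col (Hx @\<^sub>r Hu) c = 0"
  define \<xi> where "\<xi> = vec_first w nbar"
  define wu where "wu = vec_last w (L * nu)"
  define \<eta> where "\<eta> j = vec nu (\<lambda>t. wu $ (j*nu+t))" for j
  have \<xi>: "\<xi> \<in> carrier_vec nbar" unfolding \<xi>_def by simp
  have wu: "wu \<in> carrier_vec (L * nu)" unfolding wu_def by simp
  have wsplit: "w = \<xi> @\<^sub>v wu" unfolding \<xi>_def wu_def using w by simp
  have \<eta>: "\<forall>j<L. \<eta> j \<in> carrier_vec nu" unfolding \<eta>_def by simp
  have R: "\<forall>c < N + nbar. \<xi> \<bullet> xbm c + (\<Sum>j<L. \<eta> j \<bullet> um (c+j)) = 0"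
  proof (intro allI impI)
    fix c assume c: "c < N + nbar"
    have "w \<bullet> col (Hx @\<^sub>r Hu) c = (\<xi> @\<^sub>v wu) \<bullet> (xbm c @\<^sub>v stack nu c L um)"
      using col_append_rows[OF Hx Hu c] col_Hx[OF c] col_Hu[OF c] wsplit by simp
    also have "\<dots> = \<xi> \<bullet> xbm c + wu \<bullet> stack nu c L um"
      using \<xi> wu xbm[of c] c L by (intro scalar_prod_append[of _ nbar _ "L*nu"]) (auto simp: stack_def)
    also have "wu \<bullet> stack nu c L um = (\<Sum>j<L. \<eta> j \<bullet> um (c+j))"
      unfolding \<eta>_def using stack_dot[OF wu, of um c] um c by fastforce
    finally show "\<xi> \<bullet> xbm c + (\<Sum>j<L. \<eta> j \<bullet> um (c+j)) = 0" using o c by simp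
  qed
  note lk = lk_full[OF \<xi> \<eta> R PE ctrb]
  have "w \<bullet> ((x0 @\<^sub>v d0) @\<^sub>v stack nu 0 L u) = \<xi> \<bullet> (x0 @\<^sub>v d0) + wu \<bullet> stack nu 0 L u"
    unfolding wsplit using \<xi> wu x0 d0C by (intro scalar_prod_append[of _ nbar _ "L*nu"]) (auto simp: stack_def)
  also have "wu \<bullet> stack nu 0 L u = 0"
  proof -
    have "wu \<bullet> stack nu 0 L u = (\<Sum>j<L. \<eta> j \<bullet> u j)"
      unfolding \<eta>_def using stack_dot[OF wu, of u 0] u by simp
    also have "\<dots> = 0" using lk u by simp
    finally show ?thesis .
  qed
  also have "\<xi> \<bullet> (x0 @\<^sub>v d0) = vec_first \<xi> nx \<bullet> x0 + vec_last \<xi> nd \<bullet> d0"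
  proof -
    have sp: "\<xi> = vec_first \<xi> nx @\<^sub>v vec_last \<xi> nd" using \<xi> by simp
    show ?thesis by (subst sp, rule scalar_prod_append[of _ nx _ nd]) (use x0 d0C in auto)
  qed
  also have "vec_last \<xi> nd \<bullet> d0 = 0"
  proof -
    have z: "transpose_mat Kd *\<^sub>v vec_last \<xi> nd = 0\<^sub>v nd"
    proof (rule eq_vecI)
      fix c assume "c < dim_vec (0\<^sub>v nd :: real vec)"
      hence c: "c < nd" by simp
      have "(transpose_mat Kd *\<^sub>v vec_last \<xi> nd) $ c = col Kd c \<bullet> vec_last \<xi> nd" using Kd c by simp
      also have "\<dots> = vec_last \<xi> nd \<bullet> (Ad ^\<^sub>m c *\<^sub>v dm0)"
        using col_Kd[OF c] comm_scalar_prod[OF mult_mat_vec_carrier[OF pow_carrier_mat[OF Ad] vec_last_carrier, of c "xbm 0"] vec_last_carrier] by simp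
      also have "\<dots> = 0" using lk c by simp
      finally show "(transpose_mat Kd *\<^sub>v vec_last \<xi> nd) $ c = 0\<^sub>v nd $ c" using c by simp
    qed (use Kd in simp)
    have "vec_last \<xi> nd \<bullet> d0 = vec_last \<xi> nd \<bullet> (Kd *\<^sub>v gd)" using gd by simp
    also have "\<dots> = (transpose_mat Kd *\<^sub>v vec_last \<xi> nd) \<bullet> gd"
      using transpose_vec_mult_scalar[OF Kd gd(1), of "vec_last \<xi> nd"] by simp
    also have "\<dots> = 0" using z gd by simp
    finally show ?thesis .
  qed
  finally show "w \<bullet> ((x0 @\<^sub>v d0) @\<^sub>v stack nu 0 L u) = 0" using lk x0 by simp
qed

end

lemma zero_mat_mult_vec[simp]: "v \<in> carrier_vec m \<Longrightarrow> 0\<^sub>m n m *\<^sub>v v = (0\<^sub>v n :: real vec)"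
  by (intro eq_vecI) auto

lemma zero_append_vec: "0\<^sub>v (a + b) = (0\<^sub>v a @\<^sub>v 0\<^sub>v b :: real vec)"
  by (intro eq_vecI) auto

lemma colspace_col_space:
  fixes P :: "real mat"
  assumes P: "P \<in> carrier_mat n k"
  shows "colspace P = vec_space.col_space n P"
proof -
  interpret vec_space "TYPE(real)" n .
  show ?thesis unfolding colspace_def col_space_eq[OF P] using P by auto
qed

lemma rank_colspace_eq:
  fixes P Q :: "real mat"
  assumes P: "P \<in> carrier_mat n k1" and Q: "Q \<in> carrier_mat n k2" and e: "colspace P = colspace Q"
  shows "vec_space.rank n P = vec_space.rank n Q"
proof -
  interpret vec_space "TYPE(real)" n .
  have "span (set (cols P)) = span (set (cols Q))"
    using e unfolding colspace_col_space[OF P] colspace_col_space[OF Q] col_space_def .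
  thus ?thesis unfolding rank_def by simp
qed

lemma basis_mat_exists:
  fixes K :: "real mat"
  assumes K: "K \<in> carrier_mat n n'" and r: "vec_space.rank n K = \<nu>"
  shows "\<exists>Kb \<in> carrier_mat n \<nu>. colspace Kb = colspace K \<and> (\<forall>v\<in>carrier_vec \<nu>. Kb *\<^sub>v v = 0\<^sub>v n \<longrightarrow> v = 0\<^sub>v \<nu>)"
proof -
  interpret vec_space "TYPE(real)" n .
  have c: "set (cols K) \<subseteq> carrier_vec n" using cols_dim[of K] K by auto
  let ?P = "\<lambda>T. T \<subseteq> set (cols K) \<and> lin_indpt T"
  have e: "\<not> lin_dep {}" by (simp add: lin_dep_def)
  have "\<exists>S. finite S \<and> maximal S ?P"
    by (rule maximal_exists[of ?P "card (set (cols K))" "{}"]) (auto intro: card_mono rev_finite_subset simp: e)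
  then obtain S where S: "finite S" "maximal S ?P" by blast
  have SP: "S \<subseteq> set (cols K)" "lin_indpt S" using S(2) unfolding maximal_def by auto
  have SC: "S \<subseteq> carrier_vec n" using SP c by auto
  have cardS: "card S = \<nu>" using rank_card_indpt[OF K S(2)] r by simp
  have spanS: "span S = span (set (cols K))"
  proof
    show "span S \<subseteq> span (set (cols K))" using span_is_monotone[OF SP(1)] .
    have "set (cols K) \<subseteq> span S"
    proof
      fix x assume x: "x \<in> set (cols K)"
      show "x \<in> span S"
      proof (cases "x \<in> S")
        case True thus ?thesis using in_own_span[OF SC] by auto
      next
        case False
        show ?thesis
        proof (rule ccontr)
          assume "x \<notin> span S"
          moreover have xC: "x \<in> carrier_vec n" using x c by auto
          ultimately have "lin_indpt (S \<union> {x})" using lin_dep_iff_in_span[OF SC SP(2) _ False] by simp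
          hence "S \<union> {x} = S" using S(2) x SP(1) unfolding maximal_def by blast
          thus False using False by auto
        qed
      qed
    qed
    thus "span (set (cols K)) \<subseteq> span S" using span_is_subset[OF _ span_is_submodule[OF SC]] by auto
  qed
  obtain ws where ws: "set ws = S" "distinct ws" using finite_distinct_list[OF S(1)] by blast
  have lws: "length ws = \<nu>" using cardS distinct_card[OF ws(2)] ws(1) by simp
  have wsC: "set ws \<subseteq> carrier_vec n" using ws SC by auto
  define Kb where "Kb = mat_of_cols n ws"
  have Kb: "Kb \<in> carrier_mat n \<nu>" unfolding Kb_def using mat_of_cols_carrier(1)[of n ws] lws by simp
  have cKb: "cols Kb = ws" unfolding Kb_def by (rule cols_mat_of_cols[OF wsC])
  have "colspace Kb = colspace K"
    unfolding colspace_col_space[OF Kb] colspace_col_space[OF K] col_space_def cKb ws(1) spanS ..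
  moreover have "\<forall>v\<in>carrier_vec \<nu>. Kb *\<^sub>v v = 0\<^sub>v n \<longrightarrow> v = 0\<^sub>v \<nu>"
  proof (intro ballI impI, rule ccontr)
    fix v assume v: "v \<in> carrier_vec \<nu>" "Kb *\<^sub>v v = 0\<^sub>v n" "v \<noteq> 0\<^sub>v \<nu>"
    have "lin_dep (set (cols Kb))" using lin_depI[OF Kb v(1) v(3) v(2)] cKb ws(2) by (simp only:)
    thus False using SP(2) cKb ws(1) by simp
  qed
  ultimately show ?thesis using Kb by blast
qed

context sys begin

lemma dm0C: "dm0 \<in> carrier_vec nd" by simp

lemma Kd_krylov: "\<exists>a \<in> carrier_vec nd. Ad ^\<^sub>m c *\<^sub>v dm0 = Kd *\<^sub>v a"
proof -
  obtain r \<beta> where r: "r \<le> nd" "Ad ^\<^sub>m r *\<^sub>v dm0 = kry Ad dm0 r \<beta>" using krylov_dep[OF Ad dm0C] by blast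
  obtain a where a: "Ad ^\<^sub>m c *\<^sub>v dm0 = kry Ad dm0 r a" using krylov_all[OF Ad dm0C r(2)] by blast
  define a' where "a' = vec nd (\<lambda>j. if j < r then a j else 0)"
  have "Kd *\<^sub>v a' = kry Ad dm0 r a"
  proof (rule eq_vecI)
    fix i assume "i < dim_vec (kry Ad dm0 r a)"
    hence i: "i < nd" by (simp add: kry_def)
    have "(Kd *\<^sub>v a') $ i = (\<Sum>j<nd. (Ad ^\<^sub>m j *\<^sub>v dm0) $ i * (if j < r then a j else 0))"
      using i Kd by (simp add: Kd_def a'_def scalar_prod_def lessThan_atLeast0)
    also have "\<dots> = (\<Sum>j<nd. if j < r then a j * (Ad ^\<^sub>m j *\<^sub>v dm0) $ i else 0)"
      by (rule sum.cong) auto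
    also have "\<dots> = (\<Sum>j<r. a j * (Ad ^\<^sub>m j *\<^sub>v dm0) $ i)" using r(1) by (rule sum_if_less)
    finally show "(Kd *\<^sub>v a') $ i = kry Ad dm0 r a $ i" using i by (simp add: kry_def)
  qed (use Kd in \<open>simp add: kry_def\<close>)
  moreover have "a' \<in> carrier_vec nd" unfolding a'_def by simp
  ultimately show ?thesis using a by metis
qed

lemma Hx_dpart:
  assumes g: "g \<in> carrier_vec (N + nbar)"
  shows "vec_last (Hx *\<^sub>v g) nd \<in> colspace Kd"
proof -
  obtain af where af: "\<forall>c. af c \<in> carrier_vec nd \<and> Ad ^\<^sub>m c *\<^sub>v dm0 = Kd *\<^sub>v af c"
    using Kd_krylov by metis
  define P where "P = mat nd (N + nbar) (\<lambda>(j,c). af c $ j)"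
  have P: "P \<in> carrier_mat nd (N + nbar)" unfolding P_def by simp
  have "vec_last (Hx *\<^sub>v g) nd = Kd *\<^sub>v (P *\<^sub>v g)"
  proof (rule eq_vecI)
    fix i assume "i < dim_vec (Kd *\<^sub>v (P *\<^sub>v g))"
    hence i: "i < nd" using Kd by simp
    have "vec_last (Hx *\<^sub>v g) nd $ i = (\<Sum>c<N+nbar. xbm c $ (nx + i) * g $ c)"
      using i Hx g by (simp add: vec_last_def Hx_def block_hankel_def scalar_prod_def lessThan_atLeast0)
    also have "\<dots> = (\<Sum>c<N+nbar. (Kd *\<^sub>v af c) $ i * g $ c)"
    proof (rule sum.cong[OF refl])
      fix c assume "c \<in> {..<N+nbar}"
      hence cT: "c \<le> T" using L by auto
      have "xbm c $ (nx + i) = vec_last (xbm c) nd $ i" using xbm[OF cT] i by (simp add: vec_last_def)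
      also have "\<dots> = (Kd *\<^sub>v af c) $ i" using dpart[OF cT] af by simp
      finally show "xbm c $ (nx + i) * g $ c = (Kd *\<^sub>v af c) $ i * g $ c" by simp
    qed
    also have "\<dots> = (\<Sum>c<N+nbar. (\<Sum>j<nd. Kd $$ (i,j) * af c $ j) * g $ c)"
    proof (rule sum.cong[OF refl])
      fix c
      have afc: "af c \<in> carrier_vec nd" using af by simp
      show "(Kd *\<^sub>v af c) $ i * g $ c = (\<Sum>j<nd. Kd $$ (i,j) * af c $ j) * g $ c"
        using i Kd afc by (simp add: scalar_prod_def lessThan_atLeast0)
    qed
    also have "\<dots> = (\<Sum>j<nd. Kd $$ (i,j) * (\<Sum>c<N+nbar. af c $ j * g $ c))"
    proof -
      have "(\<Sum>c<N+nbar. (\<Sum>j<nd. Kd $$ (i,j) * af c $ j) * g $ c) = (\<Sum>c<N+nbar. \<Sum>j<nd. Kd $$ (i,j) * (af c $ j * g $ c))"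
        by (simp add: sum_distrib_right mult.assoc)
      also have "\<dots> = (\<Sum>j<nd. \<Sum>c<N+nbar. Kd $$ (i,j) * (af c $ j * g $ c))" by (rule sum.swap)
      also have "\<dots> = (\<Sum>j<nd. Kd $$ (i,j) * (\<Sum>c<N+nbar. af c $ j * g $ c))" by (simp add: sum_distrib_left)
      finally show ?thesis .
    qed
    also have "\<dots> = (Kd *\<^sub>v (P *\<^sub>v g)) $ i"
      using i Kd P g by (simp add: P_def scalar_prod_def lessThan_atLeast0)
    finally show "vec_last (Hx *\<^sub>v g) nd $ i = (Kd *\<^sub>v (P *\<^sub>v g)) $ i" .
  qed (use Kd in simp)
  moreover have "P *\<^sub>v g \<in> carrier_vec nd" using P g by simp
  ultimately show ?thesis unfolding colspace_def using Kd by auto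
qed

lemma part1:
  assumes PE: "vec_space.rank ((L+nbar)*nu) (block_hankel nu 0 (L+nbar) N um) = (L+nbar)*nu"
    and ctrb: "vec_space.rank nx (ctrb_mat A B) = nx"
    and rk: "vec_space.rank nd Kd = \<nu>"
  shows "vec_space.rank (nbar + L * nu) (Hx @\<^sub>r Hu) = L * nu + nx + \<nu>"
proof -
  obtain Kb where Kb: "Kb \<in> carrier_mat nd \<nu>" "colspace Kb = colspace Kd"
      "\<forall>v\<in>carrier_vec \<nu>. Kb *\<^sub>v v = 0\<^sub>v nd \<longrightarrow> v = 0\<^sub>v \<nu>"
    using basis_mat_exists[OF Kd rk] by blast
  define Q1 where "Q1 = four_block_mat (1\<^sub>m nx) (0\<^sub>m nx \<nu>) (0\<^sub>m nd nx) Kb"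
  define Q where "Q = four_block_mat Q1 (0\<^sub>m nbar (L*nu)) (0\<^sub>m (L*nu) (nx+\<nu>)) (1\<^sub>m (L*nu))"
  have Q1: "Q1 \<in> carrier_mat nbar (nx + \<nu>)" unfolding Q1_def using Kb by auto
  have Q: "Q \<in> carrier_mat (nbar + L*nu) (nx + \<nu> + L*nu)" unfolding Q_def using Q1 by auto
  have Qm: "Q *\<^sub>v ((g1 @\<^sub>v g2) @\<^sub>v g3) = (g1 @\<^sub>v (Kb *\<^sub>v g2)) @\<^sub>v g3"
    if g: "g1 \<in> carrier_vec nx" "g2 \<in> carrier_vec \<nu>" "g3 \<in> carrier_vec (L*nu)" for g1 g2 g3
  proof -
    have "Q1 *\<^sub>v (g1 @\<^sub>v g2) = (1\<^sub>m nx *\<^sub>v g1 + 0\<^sub>m nx \<nu> *\<^sub>v g2) @\<^sub>v (0\<^sub>m nd nx *\<^sub>v g1 + Kb *\<^sub>v g2)"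
      unfolding Q1_def using g Kb by (intro four_block_mat_mult_vec) auto
    also have "\<dots> = g1 @\<^sub>v (Kb *\<^sub>v g2)" using g Kb by simp
    finally have e1: "Q1 *\<^sub>v (g1 @\<^sub>v g2) = g1 @\<^sub>v (Kb *\<^sub>v g2)" .
    have "Q *\<^sub>v ((g1 @\<^sub>v g2) @\<^sub>v g3) = (Q1 *\<^sub>v (g1 @\<^sub>v g2) + 0\<^sub>m nbar (L*nu) *\<^sub>v g3) @\<^sub>v
        (0\<^sub>m (L*nu) (nx+\<nu>) *\<^sub>v (g1 @\<^sub>v g2) + 1\<^sub>m (L*nu) *\<^sub>v g3)"
      unfolding Q_def using g Q1 by (intro four_block_mat_mult_vec) auto
    also have "\<dots> = (g1 @\<^sub>v (Kb *\<^sub>v g2)) @\<^sub>v g3" using e1 g Kb by simp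
    finally show ?thesis .
  qed
  have gsplit: "g = (vec_first (vec_first g (nx+\<nu>)) nx @\<^sub>v vec_last (vec_first g (nx+\<nu>)) \<nu>) @\<^sub>v vec_last g (L*nu)"
    if "g \<in> carrier_vec (nx + \<nu> + L*nu)" for g
  proof -
    have "vec_first (vec_first g (nx+\<nu>)) nx @\<^sub>v vec_last (vec_first g (nx+\<nu>)) \<nu> = vec_first g (nx+\<nu>)"
      by (intro vec_first_last_append) simp
    thus ?thesis using that by simp
  qed
  have V: "colspace Q = {(x @\<^sub>v d) @\<^sub>v z | x d z. x \<in> carrier_vec nx \<and> d \<in> colspace Kd \<and> z \<in> carrier_vec (L*nu)}"
    (is "_ = ?V")
  proof
    show "colspace Q \<subseteq> ?V"
    proof
      fix v assume "v \<in> colspace Q"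
      then obtain g where g: "g \<in> carrier_vec (nx + \<nu> + L*nu)" "v = Q *\<^sub>v g" unfolding colspace_def using Q by auto
      let ?g1 = "vec_first (vec_first g (nx+\<nu>)) nx" and ?g2 = "vec_last (vec_first g (nx+\<nu>)) \<nu>"
        and ?g3 = "vec_last g (L*nu)"
      have "v = (?g1 @\<^sub>v (Kb *\<^sub>v ?g2)) @\<^sub>v ?g3" using g(2) gsplit[OF g(1)] Qm[of ?g1 ?g2 ?g3] by simp
      moreover have "Kb *\<^sub>v ?g2 \<in> colspace Kb" unfolding colspace_def using Kb(1) by auto
      hence "Kb *\<^sub>v ?g2 \<in> colspace Kd" using Kb(2) by simp
      ultimately show "v \<in> ?V" using vec_first_carrier vec_last_carrier by blast
    qed
    show "?V \<subseteq> colspace Q"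
    proof
      fix v assume "v \<in> ?V"
      then obtain x d z where v: "v = (x @\<^sub>v d) @\<^sub>v z" "x \<in> carrier_vec nx" "d \<in> colspace Kd" "z \<in> carrier_vec (L*nu)"
        by auto
      obtain g2 where g2: "g2 \<in> carrier_vec \<nu>" "d = Kb *\<^sub>v g2" using v(3) Kb(1,2) unfolding colspace_def by auto
      have "v = Q *\<^sub>v ((x @\<^sub>v g2) @\<^sub>v z)" using Qm[OF v(2) g2(1) v(4)] v(1) g2(2) by simp
      moreover have "(x @\<^sub>v g2) @\<^sub>v z \<in> carrier_vec (dim_col Q)" using Q v g2 by simp
      ultimately show "v \<in> colspace Q" unfolding colspace_def by auto
    qed
  qed
  have M: "Hx @\<^sub>r Hu \<in> carrier_mat (nbar + L*nu) (N + nbar)" using Hx Hu by auto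
  have VM: "colspace (Hx @\<^sub>r Hu) = colspace Q"
  proof
    show "colspace (Hx @\<^sub>r Hu) \<subseteq> colspace Q"
    proof
      fix v assume "v \<in> colspace (Hx @\<^sub>r Hu)"
      then obtain g where g: "g \<in> carrier_vec (N + nbar)" "v = (Hx @\<^sub>r Hu) *\<^sub>v g" unfolding colspace_def using M by auto
      have "v = (Hx *\<^sub>v g) @\<^sub>v (Hu *\<^sub>v g)" using g mat_mult_append[OF Hx Hu g(1)] by simp
      also have "Hx *\<^sub>v g = vec_first (Hx *\<^sub>v g) nx @\<^sub>v vec_last (Hx *\<^sub>v g) nd" using Hx g by simp
      finally have "v = (vec_first (Hx *\<^sub>v g) nx @\<^sub>v vec_last (Hx *\<^sub>v g) nd) @\<^sub>v (Hu *\<^sub>v g)" .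
      moreover have "Hu *\<^sub>v g \<in> carrier_vec (L*nu)" using Hu g by simp
      ultimately show "v \<in> colspace Q" unfolding V using Hx_dpart[OF g(1)] vec_first_carrier by blast
    qed
    show "colspace Q \<subseteq> colspace (Hx @\<^sub>r Hu)"
    proof
      fix v assume "v \<in> colspace Q"
      then obtain x d z where v: "v = (x @\<^sub>v d) @\<^sub>v z" "x \<in> carrier_vec nx" "d \<in> colspace Kd" "z \<in> carrier_vec (L*nu)"
        unfolding V by auto
      define u where "u k = vec nu (\<lambda>t. z $ (k*nu+t))" for k
      have u: "\<forall>k<L. u k \<in> carrier_vec nu" unfolding u_def by simp
      have zs: "stack nu 0 L u = z"
      proof (rule eq_vecI)
        fix q assume "q < dim_vec z"
        hence q: "q < L * nu" using v(4) by simp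
        hence nu: "nu > 0" by (cases nu) auto
        have "q div nu * nu + q mod nu = q" by simp
        thus "stack nu 0 L u $ q = z $ q" using q nu by (simp add: stack_def u_def)
      qed (use v(4) in \<open>simp add: stack_def\<close>)
      obtain g where g: "g \<in> carrier_vec (N + nbar)" "(Hx @\<^sub>r Hu) *\<^sub>v g = (x @\<^sub>v d) @\<^sub>v stack nu 0 L u"
        using part2[OF PE ctrb v(2) v(3) u] by blast
      have "dim_col (Hx @\<^sub>r Hu) = N + nbar" using M by simp
      hence "v = (Hx @\<^sub>r Hu) *\<^sub>v g \<and> g \<in> carrier_vec (dim_col (Hx @\<^sub>r Hu))" using v(1) zs g by simp
      thus "v \<in> colspace (Hx @\<^sub>r Hu)" unfolding colspace_def by blast
    qed
  qed
  have "vec_space.rank (nbar + L * nu) (Hx @\<^sub>r Hu) = vec_space.rank (nbar + L * nu) Q"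
    by (rule rank_colspace_eq[OF M Q VM])
  also have "\<dots> = nx + \<nu> + L*nu"
  proof (rule rank_trivial_kernel[OF Q])
    fix g assume g: "g \<in> carrier_vec (nx + \<nu> + L*nu)" "Q *\<^sub>v g = 0\<^sub>v (nbar + L*nu)"
    let ?g1 = "vec_first (vec_first g (nx+\<nu>)) nx" and ?g2 = "vec_last (vec_first g (nx+\<nu>)) \<nu>"
      and ?g3 = "vec_last g (L*nu)"
    have "(?g1 @\<^sub>v (Kb *\<^sub>v ?g2)) @\<^sub>v ?g3 = (0\<^sub>v nx @\<^sub>v 0\<^sub>v nd) @\<^sub>v 0\<^sub>v (L*nu)"
      using g gsplit[OF g(1)] Qm[of ?g1 ?g2 ?g3] by (simp add: zero_append_vec)
    moreover have c1: "?g1 @\<^sub>v (Kb *\<^sub>v ?g2) \<in> carrier_vec nbar" using Kb(1) by simp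
    moreover have c2: "0\<^sub>v nx @\<^sub>v 0\<^sub>v nd \<in> carrier_vec nbar" by simp
    ultimately have e0: "?g1 @\<^sub>v (Kb *\<^sub>v ?g2) = 0\<^sub>v nx @\<^sub>v 0\<^sub>v nd" "?g3 = 0\<^sub>v (L*nu)"
      using append_vec_eq[OF c1 c2] by auto
    hence e: "?g1 = 0\<^sub>v nx" "Kb *\<^sub>v ?g2 = 0\<^sub>v nd" "?g3 = 0\<^sub>v (L*nu)"
      using append_vec_eq[of ?g1 nx "0\<^sub>v nx"] by auto
    have "?g2 = 0\<^sub>v \<nu>" using Kb(3) e(2) by simp
    hence "g = (0\<^sub>v nx @\<^sub>v 0\<^sub>v \<nu>) @\<^sub>v 0\<^sub>v (L*nu)" using gsplit[OF g(1)] e by simp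
    thus "g = 0\<^sub>v (nx + \<nu> + L*nu)" by (simp add: zero_append_vec)
  qed
  finally show ?thesis by simp
qed

end

lemma lc_mult:
  fixes P :: "real mat"
  assumes P: "P \<in> carrier_mat n m" and f: "\<forall>c<C. f c \<in> carrier_vec m"
  shows "P *\<^sub>v vec m (\<lambda>s. \<Sum>c<C. g $ c * f c $ s) = vec n (\<lambda>i. \<Sum>c<C. g $ c * (P *\<^sub>v f c) $ i)"
proof (rule eq_vecI)
  fix i assume "i < dim_vec (vec n (\<lambda>i. \<Sum>c<C. g $ c * (P *\<^sub>v f c) $ i))"
  hence i: "i < n" by simp
  have "(P *\<^sub>v vec m (\<lambda>s. \<Sum>c<C. g $ c * f c $ s)) $ i = (\<Sum>s<m. P $$ (i,s) * (\<Sum>c<C. g $ c * f c $ s))"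
    using P i by (simp add: scalar_prod_def lessThan_atLeast0)
  also have "\<dots> = (\<Sum>s<m. \<Sum>c<C. g $ c * (P $$ (i,s) * f c $ s))"
    by (simp add: sum_distrib_left mult_ac)
  also have "\<dots> = (\<Sum>c<C. \<Sum>s<m. g $ c * (P $$ (i,s) * f c $ s))" by (rule sum.swap)
  also have "\<dots> = (\<Sum>c<C. g $ c * (P *\<^sub>v f c) $ i)"
  proof (rule sum.cong[OF refl])
    fix c assume "c \<in> {..<C}"
    hence fc: "f c \<in> carrier_vec m" using f by simp
    show "(\<Sum>s<m. g $ c * (P $$ (i,s) * f c $ s)) = g $ c * (P *\<^sub>v f c) $ i"
      using P i fc by (simp add: scalar_prod_def lessThan_atLeast0 sum_distrib_left)
  qed
  finally show "(P *\<^sub>v vec m (\<lambda>s. \<Sum>c<C. g $ c * f c $ s)) $ i = vec n (\<lambda>i. \<Sum>c<C. g $ c * (P *\<^sub>v f c) $ i) $ i"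
    using i by simp
qed (use P in simp)

lemma hankel_mult_index:
  assumes g: "g \<in> carrier_vec Nc" and q: "q < s * p"
  shows "(block_hankel p 0 s Nc w *\<^sub>v g) $ q = (\<Sum>c<Nc. g $ c * w (q div p + c) $ (q mod p))"
  using g q by (simp add: block_hankel_def scalar_prod_def lessThan_atLeast0 mult.commute)

context sys begin

lemma part3:
  assumes PE: "vec_space.rank ((L+nbar)*nu) (block_hankel nu 0 (L+nbar) N um) = (L+nbar)*nu"
    and ctrb: "vec_space.rank nx (ctrb_mat A B) = nx"
    and C: "C \<in> carrier_mat ny nx" and Cd: "Cd \<in> carrier_mat ny nd" and D: "D \<in> carrier_mat ny nu"
    and ym_out: "\<forall>k \<le> T. ym k = hcat C Cd *\<^sub>v xbm k + D *\<^sub>v um k"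
    and x0: "x0 \<in> carrier_vec nx" and d0: "d0 \<in> colspace Kd" and xb0: "xb 0 = x0 @\<^sub>v d0"
    and u: "\<forall>k < L. u k \<in> carrier_vec nu"
    and xbd: "\<forall>k. Suc k < L \<longrightarrow> xb (Suc k) = AL *\<^sub>v xb k + BL *\<^sub>v u k"
    and y: "\<forall>k < L. y k = hcat C Cd *\<^sub>v xb k + D *\<^sub>v u k"
  shows "\<exists>g \<in> carrier_vec (N + nbar).
     (Hu @\<^sub>r block_hankel ny 0 L (N + nbar) ym) *\<^sub>v g = stack nu 0 L u @\<^sub>v stack ny 0 L y"
proof -
  define Nc where "Nc = N + nbar"
  define CL where "CL = hcat C Cd"
  have CL: "CL \<in> carrier_mat ny nbar" unfolding CL_def hcat_def using C Cd by auto
  obtain g where g: "g \<in> carrier_vec Nc" "(Hx @\<^sub>r Hu) *\<^sub>v g = (x0 @\<^sub>v d0) @\<^sub>v stack nu 0 L u"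
    using part2[OF PE ctrb x0 d0 u] unfolding Nc_def by blast
  have d0C: "d0 \<in> carrier_vec nd" using d0 Kd unfolding colspace_def by auto
  have "(Hx *\<^sub>v g) @\<^sub>v (Hu *\<^sub>v g) = (x0 @\<^sub>v d0) @\<^sub>v stack nu 0 L u"
    using g mat_mult_append[OF Hx Hu] unfolding Nc_def by simp
  moreover have "Hx *\<^sub>v g \<in> carrier_vec nbar" using Hx g unfolding Nc_def by simp
  moreover have "x0 @\<^sub>v d0 \<in> carrier_vec nbar" using x0 d0C by simp
  ultimately have HxHu: "Hx *\<^sub>v g = x0 @\<^sub>v d0" "Hu *\<^sub>v g = stack nu 0 L u"
    using append_vec_eq by blast+
  define X where "X k = vec nbar (\<lambda>i. \<Sum>c<Nc. g $ c * xbm (c+k) $ i)" for k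
  define U where "U k = vec nu (\<lambda>i. \<Sum>c<Nc. g $ c * um (c+k) $ i)" for k
  have X0: "X 0 = xb 0"
  proof -
    have "X 0 = Hx *\<^sub>v g"
    proof (rule eq_vecI)
      fix i assume "i < dim_vec (Hx *\<^sub>v g)"
      hence i: "i < nbar" using Hx by simp
      show "X 0 $ i = (Hx *\<^sub>v g) $ i"
        using hankel_mult_index[OF g(1), of i 1 nbar xbm] i unfolding X_def Hx_def Nc_def by simp
    qed (use Hx in \<open>simp add: X_def\<close>)
    thus ?thesis using HxHu xb0 by simp
  qed
  have Uu: "U k = u k" if k: "k < L" for k
  proof (rule eq_vecI)
    fix t assume "t < dim_vec (u k)"
    moreover have "dim_vec (u k) = nu" using u k carrier_vecD by blast
    ultimately have t: "t < nu" by simp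
    have q: "k * nu + t < L * nu"
    proof -
      have "k * nu + t < k * nu + nu" using t by simp
      also have "\<dots> = Suc k * nu" by simp
      also have "\<dots> \<le> L * nu" using k by (intro mult_le_mono1) simp
      finally show ?thesis .
    qed
    have "(Hu *\<^sub>v g) $ (k * nu + t) = (\<Sum>c<Nc. g $ c * um (k + c) $ t)"
      using hankel_mult_index[OF g(1) q, of um] t unfolding Hu_def Nc_def by simp
    moreover have "stack nu 0 L u $ (k * nu + t) = u k $ t" using q t by (simp add: stack_def)
    ultimately show "U k $ t = u k $ t" using HxHu t unfolding U_def by (simp add: add.commute)
  qed (use carrier_vecD[OF u[rule_format, OF k]] in \<open>simp add: U_def\<close>)
  have xbmC: "\<forall>c<Nc. xbm (c+k) \<in> carrier_vec nbar" if "k < L" for k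
    using that xbm unfolding Nc_def by auto
  have umC: "\<forall>c<Nc. um (c+k) \<in> carrier_vec nu" if "k < L" for k
    using that um unfolding Nc_def by auto
  have Xstep: "X (Suc k) = AL *\<^sub>v X k + BL *\<^sub>v U k" if k: "Suc k < L" for k
  proof -
    have "AL *\<^sub>v X k = vec nbar (\<lambda>i. \<Sum>c<Nc. g $ c * (AL *\<^sub>v xbm (c+k)) $ i)"
      unfolding X_def using lc_mult[OF AL xbmC] k by simp
    moreover have "BL *\<^sub>v U k = vec nbar (\<lambda>i. \<Sum>c<Nc. g $ c * (BL *\<^sub>v um (c+k)) $ i)"
      unfolding U_def using lc_mult[OF BL umC] k by simp
    moreover have "X (Suc k) = vec nbar (\<lambda>i. \<Sum>c<Nc. g $ c * (AL *\<^sub>v xbm (c+k)) $ i + g $ c * (BL *\<^sub>v um (c+k)) $ i)"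
    proof (rule eq_vecI)
      fix i assume "i < dim_vec (vec nbar (\<lambda>i. \<Sum>c<Nc. g $ c * (AL *\<^sub>v xbm (c+k)) $ i + g $ c * (BL *\<^sub>v um (c+k)) $ i))"
      hence i: "i < nbar" by simp
      show "X (Suc k) $ i = vec nbar (\<lambda>i. \<Sum>c<Nc. g $ c * (AL *\<^sub>v xbm (c+k)) $ i + g $ c * (BL *\<^sub>v um (c+k)) $ i) $ i"
      proof -
        have "X (Suc k) $ i = (\<Sum>c<Nc. g $ c * xbm (c + Suc k) $ i)" unfolding X_def using i by simp
        also have "\<dots> = (\<Sum>c<Nc. g $ c * (AL *\<^sub>v xbm (c+k)) $ i + g $ c * (BL *\<^sub>v um (c+k)) $ i)"
        proof (rule sum.cong[OF refl])
          fix c assume "c \<in> {..<Nc}"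
          hence ck: "c + k < T" using k L unfolding Nc_def by auto
          have "xbm (c + Suc k) = AL *\<^sub>v xbm (c+k) + BL *\<^sub>v um (c+k)" using dyn[OF ck] by simp
          moreover have "AL *\<^sub>v xbm (c+k) \<in> carrier_vec nbar" "BL *\<^sub>v um (c+k) \<in> carrier_vec nbar"
            using AL BL xbm um ck by auto
          ultimately show "g $ c * xbm (c + Suc k) $ i = g $ c * (AL *\<^sub>v xbm (c+k)) $ i + g $ c * (BL *\<^sub>v um (c+k)) $ i"
            using i by (simp add: distrib_left)
        qed
        finally show ?thesis using i by simp
      qed
    qed (simp add: X_def)
    ultimately show ?thesis by (auto simp: sum.distrib)
  qed
  have Xxb: "X k = xb k" if "k < L" for k
    using that
  proof (induction k)
    case 0 thus ?case using X0 by simp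
  next
    case (Suc k)
    thus ?case using Xstep[OF Suc.prems] xbd Uu[of k] by simp
  qed
  define Hy where "Hy = block_hankel ny 0 L (N + nbar) ym"
  have Hy: "Hy \<in> carrier_mat (L * ny) (N + nbar)" unfolding Hy_def block_hankel_def by simp
  have HyG: "Hy *\<^sub>v g = stack ny 0 L y"
  proof (rule eq_vecI)
    fix q assume "q < dim_vec (stack ny 0 L y)"
    hence q: "q < L * ny" by (simp add: stack_def)
    hence ny: "ny > 0" by (cases ny) auto
    define k where "k = q div ny"
    define t where "t = q mod ny"
    have k: "k < L" using q ny unfolding k_def by (simp add: less_mult_imp_div_less)
    have t: "t < ny" using ny unfolding t_def by simp
    have "(Hy *\<^sub>v g) $ q = (\<Sum>c<Nc. g $ c * ym (k + c) $ t)"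
      using hankel_mult_index[OF g(1) q, of ym] unfolding Hy_def Nc_def k_def t_def by simp
    also have "\<dots> = (\<Sum>c<Nc. g $ c * (CL *\<^sub>v xbm (c+k)) $ t + g $ c * (D *\<^sub>v um (c+k)) $ t)"
    proof (rule sum.cong[OF refl])
      fix c assume "c \<in> {..<Nc}"
      hence ck: "c + k \<le> T" using k L unfolding Nc_def by auto
      have "ym (k + c) = CL *\<^sub>v xbm (c+k) + D *\<^sub>v um (c+k)" using ym_out ck unfolding CL_def by (simp add: add.commute)
      moreover have "CL *\<^sub>v xbm (c+k) \<in> carrier_vec ny" "D *\<^sub>v um (c+k) \<in> carrier_vec ny"
        using CL D xbm um ck by auto
      ultimately show "g $ c * ym (k + c) $ t = g $ c * (CL *\<^sub>v xbm (c+k)) $ t + g $ c * (D *\<^sub>v um (c+k)) $ t"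
        using t D CL by (simp add: distrib_left)
    qed
    also have "\<dots> = (CL *\<^sub>v X k) $ t + (D *\<^sub>v U k) $ t"
    proof -
      have "CL *\<^sub>v X k = vec ny (\<lambda>i. \<Sum>c<Nc. g $ c * (CL *\<^sub>v xbm (c+k)) $ i)"
        unfolding X_def using lc_mult[OF CL xbmC[OF k]] by simp
      moreover have "D *\<^sub>v U k = vec ny (\<lambda>i. \<Sum>c<Nc. g $ c * (D *\<^sub>v um (c+k)) $ i)"
        unfolding U_def using lc_mult[OF D umC[OF k]] by simp
      ultimately show ?thesis using t by (simp add: sum.distrib)
    qed
    also have "\<dots> = y k $ t"
    proof -
      have "y k = CL *\<^sub>v X k + D *\<^sub>v U k" using y k Xxb[OF k] Uu[OF k] unfolding CL_def by simp
      moreover have "CL *\<^sub>v X k \<in> carrier_vec ny" "D *\<^sub>v U k \<in> carrier_vec ny"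
        using CL D by (auto simp: X_def U_def)
      ultimately show ?thesis using t D CL by simp
    qed
    also have "y k $ t = stack ny 0 L y $ q"
    proof -
      have "q = k * ny + t" unfolding k_def t_def by simp
      thus ?thesis using q unfolding k_def t_def by (simp add: stack_def)
    qed
    finally show "(Hy *\<^sub>v g) $ q = stack ny 0 L y $ q" .
  qed (use Hy in \<open>simp add: stack_def\<close>)
  have "(Hu @\<^sub>r Hy) *\<^sub>v g = (Hu *\<^sub>v g) @\<^sub>v (Hy *\<^sub>v g)"
    using mat_mult_append[OF Hu Hy] g unfolding Nc_def by simp
  also have "\<dots> = stack nu 0 L u @\<^sub>v stack ny 0 L y" using HxHu HyG by simp
  finally show ?thesis using g unfolding Hy_def Nc_def by blast
qed

end

theorem theorem2:
  fixes nx nd nu ny N L \<nu> :: nat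
    and A Bd Ad B C Cd D :: "real mat"
    and um :: "nat \<Rightarrow> real vec" and xbm :: "nat \<Rightarrow> real vec" and ym :: "nat \<Rightarrow> real vec"
  defines "nbar \<equiv> nx + nd"
  defines "AL \<equiv> four_block_mat A Bd (0\<^sub>m nd nx) Ad"
  defines "BL \<equiv> B @\<^sub>r 0\<^sub>m nd nu"
  defines "CL \<equiv> hcat C Cd"
  defines "T \<equiv> N + L + nbar - 2"
  defines "dm0 \<equiv> vec_last (xbm 0) nd"
  defines "Kd \<equiv> mat nd nd (\<lambda>(r, c). (Ad ^\<^sub>m c *\<^sub>v dm0) $ r)"
  assumes A: "A \<in> carrier_mat nx nx" and Bd: "Bd \<in> carrier_mat nx nd"
    and Ad: "Ad \<in> carrier_mat nd nd" and B: "B \<in> carrier_mat nx nu"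
    and C: "C \<in> carrier_mat ny nx" and Cd: "Cd \<in> carrier_mat ny nd"
    and D: "D \<in> carrier_mat ny nu"
    and N: "N \<ge> 1" and L: "L \<ge> 1"
    and um_dim: "\<forall>k \<le> T. um k \<in> carrier_vec nu"
    and xbm0: "xbm 0 \<in> carrier_vec nbar"
    and xbm_dyn: "\<forall>k < T. xbm (Suc k) = AL *\<^sub>v xbm k + BL *\<^sub>v um k"
    and ym_out: "\<forall>k \<le> T. ym k = CL *\<^sub>v xbm k + D *\<^sub>v um k"
    and ctrb: "controllable A B"
    and rank_Kd: "mrank Kd = \<nu>" and nu_pos: "1 \<le> \<nu>" and nu_lt: "\<nu> < nd"
    and PE: "pers_exc nu 0 (L + nbar) N um"
  shows
    "mrank (block_hankel nbar 0 1 (N + nbar) xbm @\<^sub>r block_hankel nu 0 L (N + nbar) um)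
        = L * nu + nx + \<nu>
     \<and> (\<forall>x0 d0 u. x0 \<in> carrier_vec nx \<longrightarrow> d0 \<in> colspace Kd \<longrightarrow>
          (\<forall>k < L. u k \<in> carrier_vec nu) \<longrightarrow>
          (\<exists>g \<in> carrier_vec (N + nbar).
             (block_hankel nbar 0 1 (N + nbar) xbm @\<^sub>r block_hankel nu 0 L (N + nbar) um) *\<^sub>v g
               = (x0 @\<^sub>v d0) @\<^sub>v stack nu 0 L u))
     \<and> (\<forall>x0 d0 xb u y. x0 \<in> carrier_vec nx \<longrightarrow> d0 \<in> colspace Kd \<longrightarrow>
          xb 0 = x0 @\<^sub>v d0 \<longrightarrow>
          (\<forall>k < L. u k \<in> carrier_vec nu) \<longrightarrow>
          (\<forall>k. Suc k < L \<longrightarrow> xb (Suc k) = AL *\<^sub>v xb k + BL *\<^sub>v u k) \<longrightarrow>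
          (\<forall>k < L. y k = CL *\<^sub>v xb k + D *\<^sub>v u k) \<longrightarrow>
          (\<exists>g \<in> carrier_vec (N + nbar).
             (block_hankel nu 0 L (N + nbar) um @\<^sub>r block_hankel ny 0 L (N + nbar) ym) *\<^sub>v g
               = stack nu 0 L u @\<^sub>v stack ny 0 L y))"
proof -
  interpret S: sys nx nd nu N L A Bd Ad B um xbm
  proof
    show "A \<in> carrier_mat nx nx" "Bd \<in> carrier_mat nx nd" "Ad \<in> carrier_mat nd nd" "B \<in> carrier_mat nx nu"
      using A Bd Ad B by auto
    show "N \<ge> 1" "L \<ge> 1" using N L by auto
    show "\<forall>k \<le> N + L + (nx + nd) - 2. um k \<in> carrier_vec nu" using um_dim unfolding T_def nbar_def .
    show "xbm 0 \<in> carrier_vec (nx + nd)" using xbm0 unfolding nbar_def .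
    show "\<forall>k < N + L + (nx + nd) - 2. xbm (Suc k) =
        four_block_mat A Bd (0\<^sub>m nd nx) Ad *\<^sub>v xbm k + (B @\<^sub>r 0\<^sub>m nd nu) *\<^sub>v um k"
      using xbm_dyn unfolding T_def nbar_def AL_def BL_def .
  qed
  have ALe: "AL = S.AL" unfolding AL_def S.AL_def ..
  have BLe: "BL = S.BL" unfolding BL_def S.BL_def ..
  have Kde: "Kd = S.Kd" unfolding Kd_def S.Kd_def dm0_def ..
  have Hxe: "block_hankel nbar 0 1 (N + nbar) xbm = S.Hx" unfolding S.Hx_def nbar_def ..
  have Hue: "block_hankel nu 0 L (N + nbar) um = S.Hu" unfolding S.Hu_def nbar_def ..
  have PE': "vec_space.rank ((L + (nx + nd)) * nu) (block_hankel nu 0 (L + (nx + nd)) N um) = (L + (nx + nd)) * nu"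
    using PE unfolding pers_exc_def mrank_def nbar_def block_hankel_def by simp
  have ctrb': "vec_space.rank nx (ctrb_mat A B) = nx"
    using ctrb A unfolding controllable_def mrank_def ctrb_mat_def by simp
  have rk: "vec_space.rank nd S.Kd = \<nu>"
    using rank_Kd unfolding Kde mrank_def using S.Kd by simp
  have p1: "mrank (S.Hx @\<^sub>r S.Hu) = L * nu + nx + \<nu>"
  proof -
    have "dim_row (S.Hx @\<^sub>r S.Hu) = nx + nd + L * nu" using carrier_matD(1)[OF carrier_append_rows[OF S.Hx S.Hu]] by simp
    thus ?thesis unfolding mrank_def using S.part1[OF PE' ctrb' rk] by simp
  qed
  show ?thesis
    unfolding Hxe Hue
  proof (intro conjI allI impI)
    show "mrank (S.Hx @\<^sub>r S.Hu) = L * nu + nx + \<nu>" by (rule p1)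
  next
    fix x0 d0 :: "real vec" and u :: "nat \<Rightarrow> real vec"
    assume "x0 \<in> carrier_vec nx" "d0 \<in> colspace Kd" "\<forall>k<L. u k \<in> carrier_vec nu"
    thus "\<exists>g\<in>carrier_vec (N + nbar). (S.Hx @\<^sub>r S.Hu) *\<^sub>v g = (x0 @\<^sub>v d0) @\<^sub>v stack nu 0 L u"
      using S.part2[OF PE' ctrb'] unfolding Kde nbar_def by blast
  next
    fix x0 d0 :: "real vec" and xb u y :: "nat \<Rightarrow> real vec"
    assume a: "x0 \<in> carrier_vec nx" "d0 \<in> colspace Kd" "xb 0 = x0 @\<^sub>v d0"
      "\<forall>k<L. u k \<in> carrier_vec nu"
      "\<forall>k. Suc k < L \<longrightarrow> xb (Suc k) = AL *\<^sub>v xb k + BL *\<^sub>v u k"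
      "\<forall>k<L. y k = CL *\<^sub>v xb k + D *\<^sub>v u k"
    have ym': "\<forall>k \<le> N + L + (nx + nd) - 2. ym k = hcat C Cd *\<^sub>v xbm k + D *\<^sub>v um k"
      using ym_out unfolding T_def nbar_def CL_def .
    show "\<exists>g\<in>carrier_vec (N + nbar).
       (S.Hu @\<^sub>r block_hankel ny 0 L (N + nbar) ym) *\<^sub>v g = stack nu 0 L u @\<^sub>v stack ny 0 L y"
      using S.part3[OF PE' ctrb' C Cd D ym' a(1) a(2)[unfolded Kde] a(3) a(4) a(5)[unfolded ALe BLe] a(6)[unfolded CL_def]]
      unfolding nbar_def by blast
  qed
qed

end
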